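(* Let $\mathcal{C}$ be a category and $W$ a class of morphisms of $\mathcal{C}$ containing all identities, and regard $(N\mathcal{C}, W)$ as a marked simplicial set (the nerve $N\mathcal{C}$ marked at the $1$-simplices lying in $W$). (1) $(\mathcal{C}, W)$ satisfies proper calculus of left fractions if and only if $(N\mathcal{C}, W)$ satisfies calculus of left fractions (CLF). (2) $(\mathcal{C}, W)$ satisfies proper calculus of right fractions if and only if $(N\mathcal{C}, W)$ satisfies calculus of right fractions (CRF).
   Context: A marked simplicial set is a pair $(X,W)$ where $X$ is a simplicial set and $W \subseteq X_1$ contains all degenerate $1$-simplices; marked maps preserve marked $1$-simplices. Posets are regarded as simplicial sets via the nerve; $[n]=\{0<1<\dots<n\}$. Marked posets $\mathrm{L}^n_k$, $\mathrm{LJ}^n_k$, $\mathrm{R}^n_k$, $\mathrm{RJ}^n_k$: for $n\ge 0$, $0\le k\le n$, $\mathrm{L}^n_k$ is the nerve of the poset of subsets $A\subseteq[n]$ with $k\in A$, ordered by inclusion, where a $1$-simplex $A_0\subseteq A_1$ is marked iff $\max A_0=\max A_1$; $\mathrm{LJ}^n_k\subseteq \mathrm{L}^n_k$ is the maximal simplicial subset not containing the vertex $[n]$ (with the induced marking). $\mathrm{R}^n_k$ is the nerve of the opposite poset (same subsets, arrows $A_0\to A_1$ when $A_0\supseteq A_1$), where $A_0\supseteq A_1$ is marked iff $\min A_0=\min A_1$; $\mathrm{RJ}^n_k\subseteq\mathrm{R}^n_k$ is the maximal simplicial subset omitting the vertex $[n]$. A marking $W$ on $X$ is weakly closed under composition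 if every map $\Lambda^2_1\to X$ whose two $1$-simplices are marked extends to a $2$-simplex $\Delta^2\to X$ all of whose edges are marked. A marked quasicategory $(\mathcal{C},W)$ satisfies CLF if $W$ is weakly closed under composition and $(\mathcal{C},W)$ has the right lifting property (in marked simplicial sets) against all inclusions $\mathrm{LJ}^n_k\hookrightarrow\mathrm{L}^n_k$ with $n\ge2$, $0<k\le n$; it satisfies CRF if $W$ is weakly closed under composition and it has the right lifting property against all $\mathrm{RJ}^n_k\hookrightarrow\mathrm{R}^n_k$ with $n\ge 2$, $0\le k<n$. A marked category $(\mathcal{C},W)$ satisfies proper calculus of left fractions if: (i) $W$ is closed under composition and contains identities; (ii') every span $f\colon X\to Y$, $w\colon X\to X'$ with $w\in W$ can be completed to a commutative square $f'w=w'f$ with $f'\colon X'\to Y'$, $w'\colon Y\to Y'$, $w'\in W$, and moreover if $f\in W$ then $f'\in W$; (iii) for parallel $f,g\colon X\to Y$, if there is $w\colon X'\to X$ in $W$ with $fw=gw$ then there is $v\colon Y\to Y'$ in $W$ with $vf=vg$. It satisfies proper calculus of right fractions if $(\mathcal{C}^{\mathrm{op}},W)$ satisfies proper calculus of left fractions. *)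

theory Defs
  imports Main
begin

record ('o, 'a) category =
  Obj  :: "'o set"
  Arr  :: "'a set"
  Dom  :: "'a \<Rightarrow> 'o"
  Cod  :: "'a \<Rightarrow> 'o"
  Id   :: "'o \<Rightarrow> 'a"
  Comp :: "'a \<Rightarrow> 'a \<Rightarrow> 'a"   (* Comp g f = g o f, defined when Cod f = Dom g *)

definition category :: "('o, 'a) category \<Rightarrow> bool" where
  "category C \<longleftrightarrow>
     (\<forall>f\<in>Arr C. Dom C f \<in> Obj C \<and> Cod C f \<in> Obj C) \<and>
     (\<forall>x\<in>Obj C. Id C x \<in> Arr C \<and> Dom C (Id C x) = x \<and> Cod C (Id C x) = x) \<and>
     (\<forall>f\<in>Arr C. \<forall>g\<in>Arr C. Cod C f = Dom C g \<longrightarrow>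
        Comp C g f \<in> Arr C \<and> Dom C (Comp C g f) = Dom C f \<and> Cod C (Comp C g f) = Cod C g) \<and>
     (\<forall>f\<in>Arr C. Comp C f (Id C (Dom C f)) = f \<and> Comp C (Id C (Cod C f)) f = f) \<and>
     (\<forall>f\<in>Arr C. \<forall>g\<in>Arr C. \<forall>h\<in>Arr C. Cod C f = Dom C g \<longrightarrow> Cod C g = Dom C h \<longrightarrow>
        Comp C h (Comp C g f) = Comp C (Comp C h g) f)"

definition op_cat :: "('o, 'a) category \<Rightarrow> ('o, 'a) category" where
  "op_cat C = \<lparr>Obj = Obj C, Arr = Arr C, Dom = Cod C, Cod = Dom C, Id = Id C,
               Comp = (\<lambda>g f. Comp C f g)\<rparr>"

definition proper_left_fractions :: "('o, 'a) category \<Rightarrow> 'a set \<Rightarrow> bool" where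
  "proper_left_fractions C W \<longleftrightarrow>
     \<comment> \<open>(i)\<close>
     (\<forall>x\<in>Obj C. Id C x \<in> W) \<and>
     (\<forall>u\<in>W. \<forall>v\<in>W. Cod C u = Dom C v \<longrightarrow> Comp C v u \<in> W) \<and>
     \<comment> \<open>(ii')\<close>
     (\<forall>f\<in>Arr C. \<forall>w\<in>W. Dom C f = Dom C w \<longrightarrow>
        (\<exists>f' w'. f' \<in> Arr C \<and> w' \<in> W \<and> Dom C f' = Cod C w \<and> Dom C w' = Cod C f \<and>
                 Cod C f' = Cod C w' \<and> Comp C f' w = Comp C w' f \<and> (f \<in> W \<longrightarrow> f' \<in> W))) \<and>
     \<comment> \<open>(iii)\<close>
     (\<forall>f\<in>Arr C. \<forall>g\<in>Arr C. Dom C f = Dom C g \<longrightarrow> Cod C f = Cod C g \<longrightarrow>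
        (\<exists>w\<in>W. Cod C w = Dom C f \<and> Comp C f w = Comp C g w) \<longrightarrow>
        (\<exists>v\<in>W. Dom C v = Cod C f \<and> Comp C v f = Comp C v g))"

definition proper_right_fractions :: "('o, 'a) category \<Rightarrow> 'a set \<Rightarrow> bool" where
  "proper_right_fractions C W \<longleftrightarrow> proper_left_fractions (op_cat C) W"

text \<open>Simp X n is the set of n-simplices; Act X m n th x is the action of a monotone map
  th : [m] -> [n] on an n-simplex x, giving an m-simplex.\<close>

record 'x sset =
  Simp :: "nat \<Rightarrow> 'x set"
  Act  :: "nat \<Rightarrow> nat \<Rightarrow> (nat \<Rightarrow> nat) \<Rightarrow> 'x \<Rightarrow> 'x"

definition mono_op :: "nat \<Rightarrow> nat \<Rightarrow> (nat \<Rightarrow> nat) \<Rightarrow> bool" where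
  "mono_op m n th \<longleftrightarrow> (\<forall>i j. i \<le> j \<longrightarrow> j \<le> m \<longrightarrow> th i \<le> th j) \<and> (\<forall>i\<le>m. th i \<le> n)"

definition smap :: "'x sset \<Rightarrow> 'y sset \<Rightarrow> (nat \<Rightarrow> 'x \<Rightarrow> 'y) \<Rightarrow> bool" where
  "smap X Y f \<longleftrightarrow>
     (\<forall>n x. x \<in> Simp X n \<longrightarrow> f n x \<in> Simp Y n) \<and>
     (\<forall>m n th x. mono_op m n th \<longrightarrow> x \<in> Simp X n \<longrightarrow>
        f m (Act X m n th x) = Act Y m n th (f n x))"

definition marked_map :: "'x sset \<Rightarrow> 'x set \<Rightarrow> 'y sset \<Rightarrow> 'y set \<Rightarrow> (nat \<Rightarrow> 'x \<Rightarrow> 'y) \<Rightarrow> bool" where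
  "marked_map X WX Y WY f \<longleftrightarrow> smap X Y f \<and> (\<forall>x\<in>WX. f 1 x \<in> WY)"

text \<open>Right lifting property of (X, WX) against the inclusion of a marked simplicial
  subset (A, WA) into (B, WB).\<close>
definition rlp :: "'y sset \<Rightarrow> 'y set \<Rightarrow> 'x sset \<Rightarrow> 'x set \<Rightarrow> 'x sset \<Rightarrow> 'x set \<Rightarrow> bool" where
  "rlp X WX A WA B WB \<longleftrightarrow>
     (\<forall>f. marked_map A WA X WX f \<longrightarrow>
        (\<exists>g. marked_map B WB X WX g \<and> (\<forall>n a. a \<in> Simp A n \<longrightarrow> g n a = f n a)))"

definition pnerve :: "'p set \<Rightarrow> ('p \<Rightarrow> 'p \<Rightarrow> bool) \<Rightarrow> (nat \<Rightarrow> 'p) sset" where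
  "pnerve P le = \<lparr>Simp = (\<lambda>n. {c. (\<forall>i\<le>n. c i \<in> P) \<and>
                                   (\<forall>i j. i \<le> j \<longrightarrow> j \<le> n \<longrightarrow> le (c i) (c j)) \<and>
                                   (\<forall>i>n. c i = undefined)}),
                  Act = (\<lambda>m n th c. \<lambda>i. if i \<le> m then c (th i) else undefined)\<rparr>"

definition subsset :: "'x sset \<Rightarrow> (nat \<Rightarrow> 'x set) \<Rightarrow> 'x sset" where
  "subsset X S = X\<lparr>Simp := (\<lambda>n. Simp X n \<inter> S n)\<rparr>"

definition pmark :: "(nat \<Rightarrow> 'p) sset \<Rightarrow> ('p \<Rightarrow> 'p \<Rightarrow> bool) \<Rightarrow> (nat \<Rightarrow> 'p) set" where
  "pmark X Q = {c \<in> Simp X 1. Q (c 0) (c 1)}"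

text \<open>Nerve of a category: n-simplices are functors [n] -> C, encoded by
  sigma i j = image of the arrow i <= j.\<close>
definition cnerve :: "('o, 'a) category \<Rightarrow> (nat \<Rightarrow> nat \<Rightarrow> 'a) sset" where
  "cnerve C = \<lparr>Simp = (\<lambda>n. {s.
       (\<forall>i j. i \<le> j \<longrightarrow> j \<le> n \<longrightarrow> s i j \<in> Arr C \<and>
              Dom C (s i j) = Dom C (s i i) \<and> Cod C (s i j) = Dom C (s j j)) \<and>
       (\<forall>i\<le>n. s i i = Id C (Dom C (s i i))) \<and>
       (\<forall>i j k. i \<le> j \<longrightarrow> j \<le> k \<longrightarrow> k \<le> n \<longrightarrow> Comp C (s j k) (s i j) = s i k) \<and>
       (\<forall>i j. \<not> (i \<le> j \<and> j \<le> n) \<longrightarrow> s i j = undefined)}),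
     Act = (\<lambda>m n th s. \<lambda>i j. if i \<le> j \<and> j \<le> m then s (th i) (th j) else undefined)\<rparr>"

definition nmark :: "('o, 'a) category \<Rightarrow> 'a set \<Rightarrow> (nat \<Rightarrow> nat \<Rightarrow> 'a) set" where
  "nmark C W = {s \<in> Simp (cnerve C) 1. s 0 1 \<in> W}"

definition Lposet :: "nat \<Rightarrow> nat \<Rightarrow> nat set set" where
  "Lposet n k = {A. A \<subseteq> {0..n} \<and> k \<in> A}"

definition L :: "nat \<Rightarrow> nat \<Rightarrow> (nat \<Rightarrow> nat set) sset" where
  "L n k = pnerve (Lposet n k) (\<subseteq>)"
definition L_mark :: "nat \<Rightarrow> nat \<Rightarrow> (nat \<Rightarrow> nat set) set" where
  "L_mark n k = pmark (L n k) (\<lambda>A0 A1. Max A0 = Max A1)"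
definition LJ :: "nat \<Rightarrow> nat \<Rightarrow> (nat \<Rightarrow> nat set) sset" where
  "LJ n k = subsset (L n k) (\<lambda>d. {c. \<forall>i\<le>d. c i \<noteq> {0..n}})"
definition LJ_mark :: "nat \<Rightarrow> nat \<Rightarrow> (nat \<Rightarrow> nat set) set" where
  "LJ_mark n k = L_mark n k \<inter> Simp (LJ n k) 1"

definition R :: "nat \<Rightarrow> nat \<Rightarrow> (nat \<Rightarrow> nat set) sset" where
  "R n k = pnerve (Lposet n k) (\<supseteq>)"
definition R_mark :: "nat \<Rightarrow> nat \<Rightarrow> (nat \<Rightarrow> nat set) set" where
  "R_mark n k = pmark (R n k) (\<lambda>A0 A1. Min A0 = Min A1)"
definition RJ :: "nat \<Rightarrow> nat \<Rightarrow> (nat \<Rightarrow> nat set) sset" where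
  "RJ n k = subsset (R n k) (\<lambda>d. {c. \<forall>i\<le>d. c i \<noteq> {0..n}})"
definition RJ_mark :: "nat \<Rightarrow> nat \<Rightarrow> (nat \<Rightarrow> nat set) set" where
  "RJ_mark n k = R_mark n k \<inter> Simp (RJ n k) 1"

definition Delta2 :: "(nat \<Rightarrow> nat) sset" where
  "Delta2 = pnerve {0, 1, 2} (\<le>)"
definition Horn21 :: "(nat \<Rightarrow> nat) sset" where
  "Horn21 = subsset Delta2 (\<lambda>d. {c. (\<forall>i\<le>d. c i \<in> {0, 1}) \<or> (\<forall>i\<le>d. c i \<in> {1, 2})})"

definition weakly_closed :: "'y sset \<Rightarrow> 'y set \<Rightarrow> bool" where
  "weakly_closed X W \<longleftrightarrow> rlp X W Horn21 (Simp Horn21 1) Delta2 (Simp Delta2 1)"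

definition CLF :: "'y sset \<Rightarrow> 'y set \<Rightarrow> bool" where
  "CLF X W \<longleftrightarrow> weakly_closed X W \<and>
     (\<forall>n k. 2 \<le> n \<longrightarrow> 0 < k \<longrightarrow> k \<le> n \<longrightarrow> rlp X W (LJ n k) (LJ_mark n k) (L n k) (L_mark n k))"

definition CRF :: "'y sset \<Rightarrow> 'y set \<Rightarrow> bool" where
  "CRF X W \<longleftrightarrow> weakly_closed X W \<and>
     (\<forall>n k. 2 \<le> n \<longrightarrow> k < n \<longrightarrow> rlp X W (RJ n k) (RJ_mark n k) (R n k) (R_mark n k))"

end

theory Submission
  imports Defs
begin


locale cat =
  fixes C :: "('o, 'a) category"
  assumes cat: "category C"
begin

lemma dom_obj: "f \<in> Arr C \<Longrightarrow> Dom C f \<in> Obj C"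
  using cat unfolding category_def by blast
lemma cod_obj: "f \<in> Arr C \<Longrightarrow> Cod C f \<in> Obj C"
  using cat unfolding category_def by blast
lemma id_arr[simp]: "x \<in> Obj C \<Longrightarrow> Id C x \<in> Arr C"
  using cat unfolding category_def by blast
lemma dom_id[simp]: "x \<in> Obj C \<Longrightarrow> Dom C (Id C x) = x"
  using cat unfolding category_def by blast
lemma cod_id[simp]: "x \<in> Obj C \<Longrightarrow> Cod C (Id C x) = x"
  using cat unfolding category_def by blast
lemma comp_arr[intro]: "f \<in> Arr C \<Longrightarrow> g \<in> Arr C \<Longrightarrow> Cod C f = Dom C g \<Longrightarrow> Comp C g f \<in> Arr C"
  using cat unfolding category_def by blast
lemma dom_comp[simp]: "f \<in> Arr C \<Longrightarrow> g \<in> Arr C \<Longrightarrow> Cod C f = Dom C g \<Longrightarrow> Dom C (Comp C g f) = Dom C f"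
  using cat unfolding category_def by blast
lemma cod_comp[simp]: "f \<in> Arr C \<Longrightarrow> g \<in> Arr C \<Longrightarrow> Cod C f = Dom C g \<Longrightarrow> Cod C (Comp C g f) = Cod C g"
  using cat unfolding category_def by blast
lemma comp_id_r: "f \<in> Arr C \<Longrightarrow> x = Dom C f \<Longrightarrow> Comp C f (Id C x) = f"
  using cat unfolding category_def by blast
lemma comp_id_l: "f \<in> Arr C \<Longrightarrow> x = Cod C f \<Longrightarrow> Comp C (Id C x) f = f"
  using cat unfolding category_def by blast
lemma assoc: "f \<in> Arr C \<Longrightarrow> g \<in> Arr C \<Longrightarrow> h \<in> Arr C \<Longrightarrow> Cod C f = Dom C g \<Longrightarrow> Cod C g = Dom C h \<Longrightarrow>
   Comp C (Comp C h g) f = Comp C h (Comp C g f)"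
  using cat unfolding category_def by metis

end

definition isfun :: "('o,'a) category \<Rightarrow> 'p set \<Rightarrow> ('p \<Rightarrow> 'p \<Rightarrow> bool) \<Rightarrow> ('p \<Rightarrow> 'p \<Rightarrow> 'a) \<Rightarrow> bool" where
"isfun C P le G \<longleftrightarrow>
 (\<forall>A\<in>P. G A A \<in> Arr C \<and> G A A = Id C (Dom C (G A A))) \<and>
 (\<forall>A\<in>P. \<forall>B\<in>P. le A B \<longrightarrow> G A B \<in> Arr C \<and> Dom C (G A B) = Dom C (G A A) \<and> Cod C (G A B) = Dom C (G B B)) \<and>
 (\<forall>A\<in>P. \<forall>B\<in>P. \<forall>D\<in>P. le A B \<longrightarrow> le B D \<longrightarrow> le A D \<longrightarrow> Comp C (G B D) (G A B) = G A D)"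

lemma isfun_idarr: "isfun C P le G \<Longrightarrow> A \<in> P \<Longrightarrow> G A A \<in> Arr C"
  unfolding isfun_def by blast
lemma isfun_id: "isfun C P le G \<Longrightarrow> A \<in> P \<Longrightarrow> G A A = Id C (Dom C (G A A))"
  unfolding isfun_def by blast
lemma isfun_arr: "isfun C P le G \<Longrightarrow> A \<in> P \<Longrightarrow> B \<in> P \<Longrightarrow> le A B \<Longrightarrow> G A B \<in> Arr C"
  unfolding isfun_def by blast
lemma isfun_dom: "isfun C P le G \<Longrightarrow> A \<in> P \<Longrightarrow> B \<in> P \<Longrightarrow> le A B \<Longrightarrow> Dom C (G A B) = Dom C (G A A)"
  unfolding isfun_def by blast
lemma isfun_cod: "isfun C P le G \<Longrightarrow> A \<in> P \<Longrightarrow> B \<in> P \<Longrightarrow> le A B \<Longrightarrow> Cod C (G A B) = Dom C (G B B)"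
  unfolding isfun_def by blast
lemma isfun_comp: "isfun C P le G \<Longrightarrow> A \<in> P \<Longrightarrow> B \<in> P \<Longrightarrow> D \<in> P \<Longrightarrow> le A B \<Longrightarrow> le B D \<Longrightarrow> le A D
   \<Longrightarrow> Comp C (G B D) (G A B) = G A D"
  unfolding isfun_def by blast

definition marks :: "'a set \<Rightarrow> 'p set \<Rightarrow> ('p \<Rightarrow> 'p \<Rightarrow> bool) \<Rightarrow> ('p \<Rightarrow> 'p \<Rightarrow> bool) \<Rightarrow> ('p \<Rightarrow> 'p \<Rightarrow> 'a) \<Rightarrow> bool" where
"marks W P le Q G \<longleftrightarrow> (\<forall>A\<in>P. \<forall>B\<in>P. le A B \<longrightarrow> Q A B \<longrightarrow> G A B \<in> W)"

definition flift :: "('o,'a) category \<Rightarrow> 'a set \<Rightarrow> 'p set \<Rightarrow> ('p \<Rightarrow> 'p \<Rightarrow> bool) \<Rightarrow> 'p set \<Rightarrow> ('p \<Rightarrow> 'p \<Rightarrow> bool) \<Rightarrow> ('p \<Rightarrow> 'p \<Rightarrow> bool) \<Rightarrow> bool" where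
"flift C W P' le' P le Q \<longleftrightarrow> (\<forall>G. isfun C P' le' G \<and> marks W P' le' Q G \<longrightarrow>
   (\<exists>G'. isfun C P le G' \<and> marks W P le Q G' \<and> (\<forall>A\<in>P'. \<forall>B\<in>P'. le' A B \<longrightarrow> G' A B = G A B)))"

definition edge :: "'p \<Rightarrow> 'p \<Rightarrow> nat \<Rightarrow> 'p" where
"edge A B = (\<lambda>i. if i = 0 then A else if i = 1 then B else undefined)"
definition tri :: "'p \<Rightarrow> 'p \<Rightarrow> 'p \<Rightarrow> nat \<Rightarrow> 'p" where
"tri A B D = (\<lambda>i. if i = 0 then A else if i = 1 then B else if i = 2 then D else undefined)"

lemma edge_0[simp]: "edge A B 0 = A" and edge_1[simp]: "edge A B 1 = B" and edge_S[simp]: "edge A B (Suc 0) = B"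
  by (simp_all add: edge_def)
lemma tri_0[simp]: "tri A B D 0 = A" and tri_1[simp]: "tri A B D 1 = B" and tri_2[simp]: "tri A B D 2 = D" and tri_S[simp]: "tri A B D (Suc 0) = B"
  by (simp_all add: tri_def)

definition EF :: "(nat \<Rightarrow> (nat \<Rightarrow> 'p) \<Rightarrow> (nat \<Rightarrow> nat \<Rightarrow> 'a)) \<Rightarrow> 'p \<Rightarrow> 'p \<Rightarrow> 'a" where
"EF f A B = f 1 (edge A B) 0 1"

definition nmap :: "('p \<Rightarrow> 'p \<Rightarrow> 'a) \<Rightarrow> nat \<Rightarrow> (nat \<Rightarrow> 'p) \<Rightarrow> (nat \<Rightarrow> nat \<Rightarrow> 'a)" where
"nmap G d c = (\<lambda>i j. if i \<le> j \<and> j \<le> d then G (c i) (c j) else undefined)"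

lemma pnerve_simp: "c \<in> Simp (pnerve P le) d \<longleftrightarrow>
  (\<forall>i\<le>d. c i \<in> P) \<and> (\<forall>i j. i \<le> j \<longrightarrow> j \<le> d \<longrightarrow> le (c i) (c j)) \<and> (\<forall>i>d. c i = undefined)"
  by (simp add: pnerve_def)

lemma pnerve_act: "Act (pnerve P le) m n th c = (\<lambda>i. if i \<le> m then c (th i) else undefined)"
  by (simp add: pnerve_def)

lemma cnerve_simp: "s \<in> Simp (cnerve C) n \<longleftrightarrow>
       (\<forall>i j. i \<le> j \<longrightarrow> j \<le> n \<longrightarrow> s i j \<in> Arr C \<and>
              Dom C (s i j) = Dom C (s i i) \<and> Cod C (s i j) = Dom C (s j j)) \<and>
       (\<forall>i\<le>n. s i i = Id C (Dom C (s i i))) \<and>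
       (\<forall>i j k. i \<le> j \<longrightarrow> j \<le> k \<longrightarrow> k \<le> n \<longrightarrow> Comp C (s j k) (s i j) = s i k) \<and>
       (\<forall>i j. \<not> (i \<le> j \<and> j \<le> n) \<longrightarrow> s i j = undefined)"
  by (simp add: cnerve_def)

lemma cnerve_undef: "s \<in> Simp (cnerve C) n \<Longrightarrow> \<not> (i \<le> j \<and> j \<le> n) \<Longrightarrow> s i j = undefined"
  unfolding cnerve_simp by blast
lemma cnerve_arr: "s \<in> Simp (cnerve C) n \<Longrightarrow> i \<le> j \<Longrightarrow> j \<le> n \<Longrightarrow>
   s i j \<in> Arr C \<and> Dom C (s i j) = Dom C (s i i) \<and> Cod C (s i j) = Dom C (s j j)"
  unfolding cnerve_simp by blast
lemma cnerve_id: "s \<in> Simp (cnerve C) n \<Longrightarrow> i \<le> n \<Longrightarrow> s i i = Id C (Dom C (s i i))"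
  unfolding cnerve_simp by blast
lemma cnerve_comp: "s \<in> Simp (cnerve C) n \<Longrightarrow> i \<le> j \<Longrightarrow> j \<le> k \<Longrightarrow> k \<le> n \<Longrightarrow> Comp C (s j k) (s i j) = s i k"
  unfolding cnerve_simp by blast

lemma cnerve_act: "Act (cnerve C) m n th s = (\<lambda>i j. if i \<le> j \<and> j \<le> m then s (th i) (th j) else undefined)"
  by (simp add: cnerve_def)

lemma edge_simp: "A \<in> P \<Longrightarrow> B \<in> P \<Longrightarrow> le A A \<Longrightarrow> le A B \<Longrightarrow> le B B \<Longrightarrow> edge A B \<in> Simp (pnerve P le) 1"
  unfolding pnerve_simp edge_def
  by (auto simp: le_Suc_eq)

lemma tri_simp: "A \<in> P \<Longrightarrow> B \<in> P \<Longrightarrow> D \<in> P \<Longrightarrow> le A A \<Longrightarrow> le B B \<Longrightarrow> le D D \<Longrightarrow> le A B \<Longrightarrow> le B D \<Longrightarrow> le A D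
   \<Longrightarrow> tri A B D \<in> Simp (pnerve P le) 2"
  unfolding pnerve_simp tri_def
  by (auto simp: le_Suc_eq numeral_2_eq_2)

lemma smap_entry:
  assumes f: "smap (pnerve P le) (cnerve C) f" and c: "c \<in> Simp (pnerve P le) d"
    and ij: "i \<le> j" "j \<le> d"
  shows "f d c i j = EF f (c i) (c j)"
proof -
  define th where "th = (\<lambda>x::nat. if x = 0 then i else j)"
  have mo: "mono_op 1 d th" unfolding mono_op_def th_def using ij by auto
  have act: "Act (pnerve P le) 1 d th c = edge (c i) (c j)"
    unfolding pnerve_act edge_def th_def by (rule ext) auto
  have "f 1 (Act (pnerve P le) 1 d th c) = Act (cnerve C) 1 d th (f d c)"
    using f mo c unfolding smap_def by blast
  then have "f 1 (edge (c i) (c j)) = Act (cnerve C) 1 d th (f d c)" by (simp only: act)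
  then have "f 1 (edge (c i) (c j)) 0 1 = f d c i j"
    unfolding cnerve_act th_def by simp
  then show ?thesis unfolding EF_def by simp
qed

lemma smap_isfun:
  assumes f: "smap (pnerve P le) (cnerve C) f" and refl: "\<forall>A\<in>P. le A A"
  shows "isfun C P le (EF f)"
proof -
  have S: "x \<in> Simp (pnerve P le) n \<Longrightarrow> f n x \<in> Simp (cnerve C) n" for n x
    using f unfolding smap_def by blast
  have e: "f 1 (edge A B) i j = EF f (edge A B i) (edge A B j)" if "A \<in> P" "B \<in> P" "le A B" "i \<le> j" "j \<le> 1" for A B i j
  proof -
    have "edge A B \<in> Simp (pnerve P le) 1" using edge_simp[of A P B le] that refl by blast
    from smap_entry[OF f this, of i j] that show ?thesis by blast
  qed
  have t: "f 2 (tri A B D) i j = EF f (tri A B D i) (tri A B D j)" if "A \<in> P" "B \<in> P" "D \<in> P" "le A B" "le B D" "le A D" "i \<le> j" "j \<le> 2" for A B D i j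
  proof -
    have "tri A B D \<in> Simp (pnerve P le) 2" using tri_simp[of A P B D le] that refl by blast
    from smap_entry[OF f this, of i j] that show ?thesis by blast
  qed
  show ?thesis unfolding isfun_def
  proof (intro conjI ballI impI)
    fix A assume A: "A \<in> P"
    have s: "f 1 (edge A A) \<in> Simp (cnerve C) 1" using S edge_simp[of A P A le] A refl by blast
    have lA: "le A A" using refl A by blast
    have "f 1 (edge A A) 0 0 = EF f A A" using e[OF A A lA, of 0 0] by simp
    with cnerve_arr[OF s, of 0 0] cnerve_id[OF s, of 0]
    show "EF f A A \<in> Arr C" "EF f A A = Id C (Dom C (EF f A A))" by simp_all
  next
    fix A B assume A: "A \<in> P" and B: "B \<in> P" and le: "le A B"
    have s: "f 1 (edge A B) \<in> Simp (cnerve C) 1" using S edge_simp[of A P B le] A B le refl by blast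
    have e00: "f 1 (edge A B) 0 0 = EF f A A" using e[OF A B le, of 0 0] by simp
    have e11: "f 1 (edge A B) 1 1 = EF f B B" using e[OF A B le, of 1 1] by simp
    have e01: "f 1 (edge A B) 0 1 = EF f A B" by (simp add: EF_def)
    from cnerve_arr[OF s, of 0 1] show "EF f A B \<in> Arr C" "Dom C (EF f A B) = Dom C (EF f A A)" "Cod C (EF f A B) = Dom C (EF f B B)"
      unfolding e01[symmetric] e00[symmetric] e11[symmetric] by auto
  next
    fix A B D assume A: "A \<in> P" and B: "B \<in> P" and D: "D \<in> P" and le: "le A B" "le B D" "le A D"
    have s: "f 2 (tri A B D) \<in> Simp (cnerve C) 2" using S tri_simp[of A P B D le] A B D le refl by blast
    then have "Comp C (f 2 (tri A B D) 1 2) (f 2 (tri A B D) 0 1) = f 2 (tri A B D) 0 2"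
      by (rule cnerve_comp) auto
    moreover have "f 2 (tri A B D) 1 2 = EF f B D" using t[OF A B D le, of 1 2] by simp
    moreover have "f 2 (tri A B D) 0 1 = EF f A B" using t[OF A B D le, of 0 1] by simp
    moreover have "f 2 (tri A B D) 0 2 = EF f A D" using t[OF A B D le, of 0 2] by simp
    ultimately show "Comp C (EF f B D) (EF f A B) = EF f A D" by simp
  qed
qed

lemma smap_eq_nmap:
  assumes f: "smap (pnerve P le) (cnerve C) f" and c: "c \<in> Simp (pnerve P le) d"
  shows "f d c = nmap (EF f) d c"
proof (rule ext, rule ext)
  fix i j
  have s: "f d c \<in> Simp (cnerve C) d" using f c unfolding smap_def by blast
  show "f d c i j = nmap (EF f) d c i j"
    using smap_entry[OF f c, of i j] cnerve_undef[OF s, of i j] unfolding nmap_def by auto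
qed

lemma nmap_smap:
  assumes G: "isfun C P le G"
  shows "smap (pnerve P le) (cnerve C) (nmap G)"
  unfolding smap_def
proof (intro conjI allI impI)
  fix n c assume c: "c \<in> Simp (pnerve P le) n"
  then have cP: "\<forall>i\<le>n. c i \<in> P" and ch: "\<forall>i j. i \<le> j \<longrightarrow> j \<le> n \<longrightarrow> le (c i) (c j)"
    unfolding pnerve_simp by auto
  show "nmap G n c \<in> Simp (cnerve C) n"
    unfolding cnerve_simp nmap_def
  proof (intro conjI allI impI)
    fix i j assume ij: "i \<le> j" "j \<le> n"
    then have a: "c i \<in> P" "c j \<in> P" "le (c i) (c j)" using cP ch by auto
    show "(if i \<le> j \<and> j \<le> n then G (c i) (c j) else undefined) \<in> Arr C"
      "Dom C (if i \<le> j \<and> j \<le> n then G (c i) (c j) else undefined) =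
       Dom C (if i \<le> i \<and> i \<le> n then G (c i) (c i) else undefined)"
      "Cod C (if i \<le> j \<and> j \<le> n then G (c i) (c j) else undefined) =
       Dom C (if j \<le> j \<and> j \<le> n then G (c j) (c j) else undefined)"
      using isfun_arr[OF G a] isfun_dom[OF G a] isfun_cod[OF G a] ij by auto
  next
    fix i assume i: "i \<le> n"
    then have a: "c i \<in> P" using cP by auto
    show "(if i \<le> i \<and> i \<le> n then G (c i) (c i) else undefined) =
          Id C (Dom C (if i \<le> i \<and> i \<le> n then G (c i) (c i) else undefined))"
      using isfun_id[OF G a] i by simp
  next
    fix i j k assume ijk: "i \<le> j" "j \<le> k" "k \<le> n"
    then have a: "c i \<in> P" "c j \<in> P" "c k \<in> P" "le (c i) (c j)" "le (c j) (c k)" "le (c i) (c k)"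
      using cP ch by auto
    show "Comp C (if j \<le> k \<and> k \<le> n then G (c j) (c k) else undefined)
                 (if i \<le> j \<and> j \<le> n then G (c i) (c j) else undefined) =
           (if i \<le> k \<and> k \<le> n then G (c i) (c k) else undefined)"
      using isfun_comp[OF G a] ijk by simp
  next
    fix i j assume "\<not> (i \<le> j \<and> j \<le> n)"
    then show "(if i \<le> j \<and> j \<le> n then G (c i) (c j) else undefined) = undefined" by (rule if_not_P)
  qed
next
  fix m n th c assume mo: "mono_op m n th" and c: "c \<in> Simp (pnerve P le) n"
  show "nmap G m (Act (pnerve P le) m n th c) = Act (cnerve C) m n th (nmap G n c)"
    unfolding nmap_def pnerve_act cnerve_act
    using mo unfolding mono_op_def by (intro ext) auto
qed

lemma EF_nmap[simp]: "EF (nmap G) A B = G A B"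
  by (simp add: EF_def nmap_def edge_def)

lemma pmark_simp: "c \<in> pmark X Q \<longleftrightarrow> c \<in> Simp X 1 \<and> Q (c 0) (c 1)"
  by (simp add: pmark_def)

lemma nmark_simp: "s \<in> nmark C W \<longleftrightarrow> s \<in> Simp (cnerve C) 1 \<and> s 0 1 \<in> W"
  by (simp add: nmark_def)

lemma rlp_flift:
  assumes refl: "\<forall>A\<in>P. le A A" and refl': "\<forall>A\<in>P'. le' A A"
  shows "rlp (cnerve C) (nmark C W) (pnerve P' le') (pmark (pnerve P' le') Q) (pnerve P le) (pmark (pnerve P le) Q)
     \<longleftrightarrow> flift C W P' le' P le Q"
proof
  assume R: "rlp (cnerve C) (nmark C W) (pnerve P' le') (pmark (pnerve P' le') Q) (pnerve P le) (pmark (pnerve P le) Q)"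
  show "flift C W P' le' P le Q" unfolding flift_def
  proof (intro allI impI, elim conjE)
    fix G assume G: "isfun C P' le' G" and M: "marks W P' le' Q G"
    have mm: "marked_map (pnerve P' le') (pmark (pnerve P' le') Q) (cnerve C) (nmark C W) (nmap G)"
      unfolding marked_map_def
    proof
      show sm: "smap (pnerve P' le') (cnerve C) (nmap G)" by (rule nmap_smap[OF G])
      show "\<forall>x\<in>pmark (pnerve P' le') Q. nmap G 1 x \<in> nmark C W"
      proof
        fix x assume x: "x \<in> pmark (pnerve P' le') Q"
        then have xs: "x \<in> Simp (pnerve P' le') 1" and q: "Q (x 0) (x 1)" by (auto simp: pmark_simp)
        have "nmap G 1 x \<in> Simp (cnerve C) 1" using sm xs unfolding smap_def by blast
        moreover have "nmap G 1 x 0 1 = G (x 0) (x 1)" by (simp add: nmap_def)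
        moreover have "G (x 0) (x 1) \<in> W" using M q xs unfolding marks_def pnerve_simp by auto
        ultimately show "nmap G 1 x \<in> nmark C W" by (simp add: nmark_simp)
      qed
    qed
    then obtain g where g: "marked_map (pnerve P le) (pmark (pnerve P le) Q) (cnerve C) (nmark C W) g"
      and ag: "\<forall>n a. a \<in> Simp (pnerve P' le') n \<longrightarrow> g n a = nmap G n a"
      using R unfolding rlp_def by blast
    have gs: "smap (pnerve P le) (cnerve C) g" using g unfolding marked_map_def by blast
    show "\<exists>G'. isfun C P le G' \<and> marks W P le Q G' \<and> (\<forall>A\<in>P'. \<forall>B\<in>P'. le' A B \<longrightarrow> G' A B = G A B)"
    proof (intro exI conjI)
      show "isfun C P le (EF g)" by (rule smap_isfun[OF gs refl])
      show "marks W P le Q (EF g)" unfolding marks_def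
      proof (intro ballI impI)
        fix A B assume A: "A \<in> P" and B: "B \<in> P" and le: "le A B" and q: "Q A B"
        have "edge A B \<in> pmark (pnerve P le) Q"
          using edge_simp[OF A B] refl A B le q by (auto simp: pmark_simp edge_def)
        then have "g 1 (edge A B) \<in> nmark C W" using g unfolding marked_map_def by blast
        then show "EF g A B \<in> W" by (simp add: nmark_simp EF_def)
      qed
      show "\<forall>A\<in>P'. \<forall>B\<in>P'. le' A B \<longrightarrow> EF g A B = G A B"
      proof (intro ballI impI)
        fix A B assume A: "A \<in> P'" and B: "B \<in> P'" and le: "le' A B"
        have "edge A B \<in> Simp (pnerve P' le') 1" using edge_simp[OF A B] refl' A B le by auto
        then have "g 1 (edge A B) = nmap G 1 (edge A B)" using ag by blast
        then show "EF g A B = G A B" by (simp add: EF_def nmap_def edge_def)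
      qed
    qed
  qed
next
  assume F: "flift C W P' le' P le Q"
  show "rlp (cnerve C) (nmark C W) (pnerve P' le') (pmark (pnerve P' le') Q) (pnerve P le) (pmark (pnerve P le) Q)"
    unfolding rlp_def
  proof (intro allI impI)
    fix f assume f: "marked_map (pnerve P' le') (pmark (pnerve P' le') Q) (cnerve C) (nmark C W) f"
    have fs: "smap (pnerve P' le') (cnerve C) f" using f unfolding marked_map_def by blast
    have G: "isfun C P' le' (EF f)" by (rule smap_isfun[OF fs refl'])
    have M: "marks W P' le' Q (EF f)" unfolding marks_def
    proof (intro ballI impI)
      fix A B assume A: "A \<in> P'" and B: "B \<in> P'" and le: "le' A B" and q: "Q A B"
      have "edge A B \<in> pmark (pnerve P' le') Q"
        using edge_simp[OF A B] refl' A B le q by (auto simp: pmark_simp edge_def)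
      then have "f 1 (edge A B) \<in> nmark C W" using f unfolding marked_map_def by blast
      then show "EF f A B \<in> W" by (simp add: nmark_simp EF_def)
    qed
    obtain G' where G': "isfun C P le G'" and M': "marks W P le Q G'"
      and ag: "\<forall>A\<in>P'. \<forall>B\<in>P'. le' A B \<longrightarrow> G' A B = EF f A B"
      using F G M unfolding flift_def by blast
    show "\<exists>g. marked_map (pnerve P le) (pmark (pnerve P le) Q) (cnerve C) (nmark C W) g \<and>
             (\<forall>n a. a \<in> Simp (pnerve P' le') n \<longrightarrow> g n a = f n a)"
    proof (intro exI conjI allI impI)
      have sm: "smap (pnerve P le) (cnerve C) (nmap G')" by (rule nmap_smap[OF G'])
      show "marked_map (pnerve P le) (pmark (pnerve P le) Q) (cnerve C) (nmark C W) (nmap G')"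
        unfolding marked_map_def
      proof (intro conjI ballI)
        show "smap (pnerve P le) (cnerve C) (nmap G')" by (rule sm)
        fix x assume x: "x \<in> pmark (pnerve P le) Q"
        then have xs: "x \<in> Simp (pnerve P le) 1" and q: "Q (x 0) (x 1)" by (auto simp: pmark_simp)
        have "nmap G' 1 x \<in> Simp (cnerve C) 1" using sm xs unfolding smap_def by blast
        moreover have "nmap G' 1 x 0 1 = G' (x 0) (x 1)" by (simp add: nmap_def)
        moreover have "G' (x 0) (x 1) \<in> W" using M' q xs unfolding marks_def pnerve_simp by auto
        ultimately show "nmap G' 1 x \<in> nmark C W" by (simp add: nmark_simp)
      qed
    next
      fix n a assume a: "a \<in> Simp (pnerve P' le') n"
      have "f n a = nmap (EF f) n a" by (rule smap_eq_nmap[OF fs a])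
      also have "\<dots> = nmap G' n a"
        unfolding nmap_def using a ag unfolding pnerve_simp by (intro ext) auto
      finally show "nmap G' n a = f n a" by simp
    qed
  qed
qed




lemma LJ_pnerve: "LJ n k = pnerve (Lposet n k - {{0..n}}) (\<subseteq>)"
  unfolding LJ_def L_def subsset_def pnerve_def by (auto intro!: ext)

lemma RJ_pnerve: "RJ n k = pnerve (Lposet n k - {{0..n}}) (\<supseteq>)"
  unfolding RJ_def R_def subsset_def pnerve_def by (auto intro!: ext)

definition le21 :: "nat \<Rightarrow> nat \<Rightarrow> bool" where
  "le21 x y \<longleftrightarrow> x \<le> y \<and> \<not> (x = 0 \<and> y = 2)"

lemma Horn21_pnerve: "Horn21 = pnerve {0,1,2} le21"
proof -
  have "Simp Horn21 d = Simp (pnerve {0,1,2} le21) d" for d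
  proof
    show "Simp Horn21 d \<subseteq> Simp (pnerve {0,1,2} le21) d"
    proof
      fix c assume "c \<in> Simp Horn21 d"
      then have c: "c \<in> Simp Delta2 d" and h: "(\<forall>i\<le>d. c i \<in> {0, 1}) \<or> (\<forall>i\<le>d. c i \<in> {1, 2})"
        unfolding Horn21_def subsset_def by auto
      from c have "(\<forall>i\<le>d. c i \<in> {0,1,2}) \<and> (\<forall>i j. i \<le> j \<longrightarrow> j \<le> d \<longrightarrow> c i \<le> c j) \<and> (\<forall>i>d. c i = undefined)"
        unfolding Delta2_def pnerve_simp by blast
      then have a: "\<forall>i\<le>d. c i \<in> {0,1,2}" and b: "\<forall>i j. i \<le> j \<longrightarrow> j \<le> d \<longrightarrow> c i \<le> c j"
        and u: "\<forall>i>d. c i = undefined" by blast+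
      have "le21 (c i) (c j)" if "i \<le> j" "j \<le> d" for i j
      proof -
        have "c i \<le> c j" using b that by blast
        moreover have "\<not> (c i = 0 \<and> c j = 2)"
        proof
          assume "c i = 0 \<and> c j = 2"
          moreover have "i \<le> d" using that by simp
          ultimately show False using h that
          proof (elim disjE conjE)
            assume "c i = 0" "c j = 2" "\<forall>i\<le>d. c i \<in> {0, 1}" "j \<le> d"
            then have "c j \<in> {0,1}" by blast
            then show False using \<open>c j = 2\<close> by simp
          next
            assume "c i = 0" "c j = 2" "\<forall>i\<le>d. c i \<in> {1, 2}" "i \<le> d"
            then have "c i \<in> {1,2}" by blast
            then show False using \<open>c i = 0\<close> by simp
          qed
        qed
        ultimately show ?thesis unfolding le21_def by blast
      qed
      with a u show "c \<in> Simp (pnerve {0,1,2} le21) d"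
        unfolding pnerve_simp by blast
    qed
    show "Simp (pnerve {0,1,2} le21) d \<subseteq> Simp Horn21 d"
    proof
      fix c assume "c \<in> Simp (pnerve {0,1,2} le21) d"
      then have a: "\<forall>i\<le>d. c i \<in> {0,1,2}" and b: "\<forall>i j. i \<le> j \<longrightarrow> j \<le> d \<longrightarrow> le21 (c i) (c j)"
        and u: "\<forall>i>d. c i = undefined"
        unfolding pnerve_simp by blast+
      have cD: "c \<in> Simp Delta2 d" unfolding Delta2_def pnerve_simp using a b u unfolding le21_def by blast
      have "(\<forall>i\<le>d. c i \<in> {0, 1}) \<or> (\<forall>i\<le>d. c i \<in> {1, 2})"
      proof (rule ccontr)
        assume "\<not> ?thesis"
        then obtain i j where i: "i \<le> d" "c i \<notin> {0,1}" and j: "j \<le> d" "c j \<notin> {1,2}" by blast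
        then have ci: "c i = 2" and cj: "c j = 0" using a by auto
        show False
        proof (cases "i \<le> j")
          case True then have "le21 (c i) (c j)" using b j by blast
          then show False using ci cj unfolding le21_def by simp
        next
          case False then have "le21 (c j) (c i)" using b i by simp
          then show False using ci cj unfolding le21_def by simp
        qed
      qed
      with cD show "c \<in> Simp Horn21 d" unfolding Horn21_def subsset_def by simp
    qed
  qed
  then show ?thesis unfolding Horn21_def subsset_def Delta2_def pnerve_def by (auto intro!: ext)
qed

lemma pmark_all: "Simp X 1 = pmark X (\<lambda>_ _. True)"
  by (simp add: pmark_def)

lemma LJ_mark_pmark: "LJ_mark n k = pmark (LJ n k) (\<lambda>A0 A1. Max A0 = Max A1)"
  unfolding LJ_mark_def L_mark_def pmark_def LJ_def subsset_def by auto

lemma RJ_mark_pmark: "RJ_mark n k = pmark (RJ n k) (\<lambda>A0 A1. Min A0 = Min A1)"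
  unfolding RJ_mark_def R_mark_def pmark_def RJ_def subsset_def by auto

lemma weakly_closed_flift:
  "weakly_closed (cnerve C) (nmark C W) \<longleftrightarrow> flift C W {0,1,2} le21 {0,1,2} (\<le>) (\<lambda>_ _. True)"
proof -
  have "weakly_closed (cnerve C) (nmark C W) \<longleftrightarrow>
    rlp (cnerve C) (nmark C W) (pnerve {0,1,2} le21) (pmark (pnerve {0,1,2} le21) (\<lambda>_ _. True))
      (pnerve {0,1,2} (\<le>)) (pmark (pnerve {0,1,2} (\<le>)) (\<lambda>_ _. True))"
    unfolding weakly_closed_def Horn21_pnerve Delta2_def pmark_all ..
  also have "\<dots> \<longleftrightarrow> flift C W {0,1,2} le21 {0,1,2} (\<le>) (\<lambda>_ _. True)"
    by (rule rlp_flift) (auto simp: le21_def)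
  finally show ?thesis .
qed

lemma CLF_flift:
  "CLF (cnerve C) (nmark C W) \<longleftrightarrow> flift C W {0,1,2} le21 {0,1,2} (\<le>) (\<lambda>_ _. True) \<and>
     (\<forall>n k. 2 \<le> n \<longrightarrow> 0 < k \<longrightarrow> k \<le> n \<longrightarrow>
        flift C W (Lposet n k - {{0..n}}) (\<subseteq>) (Lposet n k) (\<subseteq>) (\<lambda>A0 A1. Max A0 = Max A1))"
proof -
  have "rlp (cnerve C) (nmark C W) (LJ n k) (LJ_mark n k) (L n k) (L_mark n k) \<longleftrightarrow>
    flift C W (Lposet n k - {{0..n}}) (\<subseteq>) (Lposet n k) (\<subseteq>) (\<lambda>A0 A1. Max A0 = Max A1)" for n k
    unfolding LJ_mark_pmark L_mark_def unfolding LJ_pnerve L_def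
    by (rule rlp_flift) auto
  then show ?thesis unfolding CLF_def weakly_closed_flift by simp
qed

lemma CRF_flift:
  "CRF (cnerve C) (nmark C W) \<longleftrightarrow> flift C W {0,1,2} le21 {0,1,2} (\<le>) (\<lambda>_ _. True) \<and>
     (\<forall>n k. 2 \<le> n \<longrightarrow> k < n \<longrightarrow>
        flift C W (Lposet n k - {{0..n}}) (\<supseteq>) (Lposet n k) (\<supseteq>) (\<lambda>A0 A1. Min A0 = Min A1))"
proof -
  have "rlp (cnerve C) (nmark C W) (RJ n k) (RJ_mark n k) (R n k) (R_mark n k) \<longleftrightarrow>
    flift C W (Lposet n k - {{0..n}}) (\<supseteq>) (Lposet n k) (\<supseteq>) (\<lambda>A0 A1. Min A0 = Min A1)" for n k
    unfolding RJ_mark_pmark R_mark_def unfolding RJ_pnerve R_def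
    by (rule rlp_flift) auto
  then show ?thesis unfolding CRF_def weakly_closed_flift by simp
qed




declare cat.comp_arr[simp]

locale mcat = cat +
  fixes W :: "'a set"
  assumes W_arr: "W \<subseteq> Arr C" and W_id: "\<forall>x\<in>Obj C. Id C x \<in> W"
begin

lemma W_arrI[simp]: "w \<in> W \<Longrightarrow> w \<in> Arr C" using W_arr by blast
lemma W_idI[simp]: "x \<in> Obj C \<Longrightarrow> Id C x \<in> W" using W_id by blast

end

context cat begin
lemma isfun_cid_r: "isfun C P le G \<Longrightarrow> A \<in> P \<Longrightarrow> f \<in> Arr C \<Longrightarrow> Dom C f = Dom C (G A A) \<Longrightarrow> Comp C f (G A A) = f"
  using isfun_id[of C P le G A] comp_id_r[of f] by metis
lemma isfun_cid_l: "isfun C P le G \<Longrightarrow> A \<in> P \<Longrightarrow> f \<in> Arr C \<Longrightarrow> Cod C f = Dom C (G A A) \<Longrightarrow> Comp C (G A A) f = f"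
  using isfun_id[of C P le G A] comp_id_l[of f] by metis
end

context mcat begin

definition compclosed where "compclosed \<longleftrightarrow> (\<forall>u\<in>W. \<forall>v\<in>W. Cod C u = Dom C v \<longrightarrow> Comp C v u \<in> W)"

lemma weak_iff: "flift C W {0,1,2} le21 {0,1,2} (\<le>) (\<lambda>_ _. True) \<longleftrightarrow> compclosed"
proof
  assume F: "flift C W {0,1,2} le21 {0,1,2} (\<le>) (\<lambda>_ _. True)"
  show compclosed unfolding compclosed_def
  proof (intro ballI impI)
    fix u v assume u: "u \<in> W" and v: "v \<in> W" and uv: "Cod C u = Dom C v"
    define ob where "ob = (\<lambda>x::nat. if x = 0 then Dom C u else if x = 1 then Cod C u else Cod C v)"
    define G where "G = (\<lambda>x y::nat. if x = y then Id C (ob x) else if x = 0 then u else v)"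
    have obO: "ob x \<in> Obj C" for x using u v unfolding ob_def by (auto intro: dom_obj cod_obj)
    have le: "le21 x y \<Longrightarrow> x \<in> {0,1,2} \<Longrightarrow> y \<in> {0,1,2} \<Longrightarrow> x = y \<or> (x = 0 \<and> y = 1) \<or> (x = 1 \<and> y = 2)" for x y
      unfolding le21_def by auto
    have gA: "G x y \<in> Arr C \<and> Dom C (G x y) = ob x \<and> Cod C (G x y) = ob y"
      if l: "le21 x y" and x: "x \<in> {0,1,2}" and y: "y \<in> {0,1,2}" for x y
    proof -
      from le[OF l x y] show ?thesis
      proof (elim disjE)
        assume "x = y" then show ?thesis using obO[of x] unfolding G_def by simp
      next
        assume "x = 0 \<and> y = 1" then show ?thesis using u unfolding G_def ob_def by simp
      next
        assume "x = 1 \<and> y = 2" then show ?thesis using v uv unfolding G_def ob_def by simp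
      qed
    qed
    have gI: "G x x = Id C (ob x)" for x unfolding G_def by simp
    have GF: "isfun C {0,1,2} le21 G" unfolding isfun_def
    proof (intro conjI ballI impI)
      fix A :: nat assume "A \<in> {0,1,2}"
      show "G A A \<in> Arr C" "G A A = Id C (Dom C (G A A))" using obO[of A] unfolding gI by auto
    next
      fix A B :: nat assume A: "A \<in> {0,1,2}" and B: "B \<in> {0,1,2}" and l: "le21 A B"
      show "G A B \<in> Arr C" "Dom C (G A B) = Dom C (G A A)" "Cod C (G A B) = Dom C (G B B)"
        using gA[OF l A B] obO[of A] obO[of B] unfolding gI by auto
    next
      fix A B D :: nat assume A: "A \<in> {0,1,2}" and B: "B \<in> {0,1,2}" and D: "D \<in> {0,1,2}"
        and l: "le21 A B" "le21 B D" "le21 A D"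
      from le[OF l(1) A B] le[OF l(2) B D] le[OF l(3) A D]
      have "A = B \<or> B = D" by auto
      then show "Comp C (G B D) (G A B) = G A D"
      proof
        assume "A = B"
        then show ?thesis using gA[OF l(3) A D] comp_id_r[of "G A D" "ob A"] by (simp add: gI)
      next
        assume "B = D"
        then show ?thesis using gA[OF l(3) A D] comp_id_l[of "G A D" "ob D"] by (simp add: gI)
      qed
    qed
    have GM: "marks W {0,1,2} le21 (\<lambda>_ _. True) G" unfolding marks_def G_def using u v obO by auto
    obtain G' where G': "isfun C {0,1,2} (\<le>) G'" and M': "marks W {0,1,2} (\<le>) (\<lambda>_ _. True) G'"
      and ag: "\<forall>A\<in>{0,1,2}. \<forall>B\<in>{0,1,2}. le21 A B \<longrightarrow> G' A B = G A B"
      using F GF GM unfolding flift_def by blast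
    have "Comp C (G' 1 2) (G' 0 1) = G' 0 2" by (rule isfun_comp[OF G']) auto
    moreover have "G' 1 2 = v" "G' 0 1 = u" using ag unfolding G_def le21_def by auto
    moreover have "G' 0 2 \<in> W" using M' unfolding marks_def by auto
    ultimately show "Comp C v u \<in> W" by simp
  qed
next
  assume cc: compclosed
  show "flift C W {0,1,2} le21 {0,1,2} (\<le>) (\<lambda>_ _. True)" unfolding flift_def
  proof (intro allI impI, elim conjE)
    fix G assume G: "isfun C {0,1,2} le21 G" and M: "marks W {0,1,2} le21 (\<lambda>_ _. True) G"
    define G' where "G' = (\<lambda>x y::nat. if x = 0 \<and> y = 2 then Comp C (G 1 2) (G 0 1) else G x y)"
    have in3: "(0::nat) \<in> {0,1,2}" "(1::nat) \<in> {0,1,2}" "(2::nat) \<in> {0,1,2}" by auto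
    have l01: "le21 0 1" and l12: "le21 1 2" and l00: "le21 0 0" and l22: "le21 2 2"
      by (auto simp: le21_def)
    have a01: "G 0 1 \<in> Arr C" by (rule isfun_arr[OF G in3(1) in3(2) l01])
    have a12: "G 1 2 \<in> Arr C" by (rule isfun_arr[OF G in3(2) in3(3) l12])
    have c01: "Cod C (G 0 1) = Dom C (G 1 1)" by (rule isfun_cod[OF G in3(1) in3(2) l01])
    have d12: "Dom C (G 1 2) = Dom C (G 1 1)" by (rule isfun_dom[OF G in3(2) in3(3) l12])
    have d01: "Dom C (G 0 1) = Dom C (G 0 0)" by (rule isfun_dom[OF G in3(1) in3(2) l01])
    have c12: "Cod C (G 1 2) = Dom C (G 2 2)" by (rule isfun_cod[OF G in3(2) in3(3) l12])
    have a02: "G' 0 2 \<in> Arr C" "Dom C (G' 0 2) = Dom C (G 0 0)" "Cod C (G' 0 2) = Dom C (G 2 2)"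
      using a01 a12 c01 d12 d01 c12 unfolding G'_def by auto
    have lecases: "x \<le> y \<Longrightarrow> x \<in> {0,1,2} \<Longrightarrow> y \<in> {0,1,2} \<Longrightarrow> le21 x y \<or> (x = 0 \<and> y = 2)" for x y :: nat
      unfolding le21_def by auto
    have G'eq: "\<not> (x = 0 \<and> y = 2) \<Longrightarrow> G' x y = G x y" for x y unfolding G'_def by auto
    have G'diag[simp]: "G' x x = G x x" for x unfolding G'_def by auto
    show "\<exists>G'. isfun C {0,1,2} (\<le>) G' \<and> marks W {0,1,2} (\<le>) (\<lambda>_ _. True) G' \<and>
              (\<forall>A\<in>{0,1,2}. \<forall>B\<in>{0,1,2}. le21 A B \<longrightarrow> G' A B = G A B)"
    proof (intro exI conjI)
      show "isfun C {0,1,2} (\<le>) G'" unfolding isfun_def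
      proof (intro conjI ballI impI)
        fix A :: nat assume A: "A \<in> {0,1,2}"
        have e: "G' A A = G A A" unfolding G'_def by auto
        show "G' A A \<in> Arr C" unfolding e by (rule isfun_idarr[OF G A])
        show "G' A A = Id C (Dom C (G' A A))" unfolding e by (rule isfun_id[OF G A])
      next
        fix A B :: nat assume A: "A \<in> {0,1,2}" and B: "B \<in> {0,1,2}" and l: "A \<le> B"
        from lecases[OF l A B] have "G' A B \<in> Arr C \<and> Dom C (G' A B) = Dom C (G' A A) \<and> Cod C (G' A B) = Dom C (G' B B)"
        proof (elim disjE)
          assume l2: "le21 A B"
          then have ne: "\<not> (A = 0 \<and> B = 2)" by (auto simp: le21_def)
          show ?thesis
            using isfun_arr[OF G A B l2] isfun_dom[OF G A B l2] isfun_cod[OF G A B l2] G'eq[OF ne]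
              by auto
        next
          assume "A = 0 \<and> B = 2"
          then show ?thesis using a02 by auto
        qed
        then show "G' A B \<in> Arr C" "Dom C (G' A B) = Dom C (G' A A)" "Cod C (G' A B) = Dom C (G' B B)" by auto
      next
        fix A B D :: nat assume A: "A \<in> {0,1,2}" and B: "B \<in> {0,1,2}" and D: "D \<in> {0,1,2}"
          and l: "A \<le> B" "B \<le> D" "A \<le> D"
        show "Comp C (G' B D) (G' A B) = G' A D"
        proof (cases "A = 0 \<and> D = 2")
          case False
          then have "le21 A B" "le21 B D" "le21 A D" using l A B D unfolding le21_def by auto
          moreover have "G' B D = G B D" "G' A B = G A B" "G' A D = G A D" using False l G'eq A B D by auto
          ultimately show ?thesis using isfun_comp[OF G A B D] by simp
        next
          case True
          then have AD: "A = 0" "D = 2" by auto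
          have "B = 0 \<or> B = 1 \<or> B = 2" using B by auto
          then show ?thesis
          proof (elim disjE)
            assume "B = 0"
            moreover have "G' 0 0 = G 0 0" unfolding G'_def by simp
            ultimately show ?thesis using AD a02 isfun_cid_r[OF G in3(1), of "G' 0 2"] by simp
          next
            assume "B = 1"
            then show ?thesis using AD G'eq[of 1 2] G'eq[of 0 1] unfolding G'_def by simp
          next
            assume "B = 2"
            moreover have "G' 2 2 = G 2 2" unfolding G'_def by simp
            ultimately show ?thesis using AD a02 isfun_cid_l[OF G in3(3), of "G' 0 2"] by simp
          qed
        qed
      qed
      show "marks W {0,1,2} (\<le>) (\<lambda>_ _. True) G'" unfolding marks_def
      proof (intro ballI impI)
        fix A B :: nat assume A: "A \<in> {0,1,2}" and B: "B \<in> {0,1,2}" and l: "A \<le> B"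
        from lecases[OF l A B] show "G' A B \<in> W"
        proof
          assume l2: "le21 A B"
          then have "\<not> (A = 0 \<and> B = 2)" by (auto simp: le21_def)
          then show ?thesis using M A B l2 G'eq unfolding marks_def by auto
        next
          assume "A = 0 \<and> B = 2"
          moreover have "G 0 1 \<in> W" "G 1 2 \<in> W" using M in3 l01 l12 unfolding marks_def by auto
          ultimately show ?thesis using cc c01 d12 unfolding compclosed_def G'_def by auto
        qed
      qed
      show "\<forall>A\<in>{0,1,2}. \<forall>B\<in>{0,1,2}. le21 A B \<longrightarrow> G' A B = G A B"
        using G'eq by (auto simp: le21_def)
    qed
  qed
qed

end



locale plf = mcat +
  assumes plf: "proper_left_fractions C W"
begin

declare comp_arr[simp]

lemma cc: "u \<in> W \<Longrightarrow> v \<in> W \<Longrightarrow> Cod C u = Dom C v \<Longrightarrow> Comp C v u \<in> W"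
  using plf unfolding proper_left_fractions_def by blast

lemma ii: assumes "f \<in> Arr C" "w \<in> W" "Dom C f = Dom C w"
  obtains f' w' where "f' \<in> Arr C" "w' \<in> W" "Dom C f' = Cod C w" "Dom C w' = Cod C f"
    "Cod C f' = Cod C w'" "Comp C f' w = Comp C w' f" "f \<in> W \<Longrightarrow> f' \<in> W"
  using plf assms unfolding proper_left_fractions_def by blast

lemma iii: assumes "f \<in> Arr C" "g \<in> Arr C" "Dom C f = Dom C g" "Cod C f = Cod C g"
    "w \<in> W" "Cod C w = Dom C f" "Comp C f w = Comp C g w"
  obtains v where "v \<in> W" "Dom C v = Cod C f" "Comp C v f = Comp C v g"
  using plf assms unfolding proper_left_fractions_def by blast

definition EE where "EE x y \<longleftrightarrow> (\<exists>u\<in>W. Dom C u = Cod C x \<and> Comp C u x = Comp C u y)"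

lemma EE_refl: "x \<in> Arr C \<Longrightarrow> EE x x"
proof -
  assume x: "x \<in> Arr C"
  then have o: "Cod C x \<in> Obj C" by (rule cod_obj)
  show "EE x x" unfolding EE_def by (rule bexI[of _ "Id C (Cod C x)"]) (use o in auto)
qed

lemma EE_eq: "x \<in> Arr C \<Longrightarrow> x = y \<Longrightarrow> EE x y"
  using EE_refl by simp

lemma EE_cancel:
  assumes x: "x \<in> Arr C" and y: "y \<in> Arr C" and d: "Dom C x = Dom C y" and c: "Cod C x = Cod C y"
    and w: "w \<in> W" "Cod C w = Dom C x" and e: "EE (Comp C x w) (Comp C y w)"
  shows "EE x y"
proof -
  have wa: "w \<in> Arr C" using w by simp
  obtain u where u: "u \<in> W" "Dom C u = Cod C x" and eq: "Comp C u (Comp C x w) = Comp C u (Comp C y w)"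
    using e x wa w unfolding EE_def by auto
  have ua: "u \<in> Arr C" using u by simp
  have "Comp C (Comp C u x) w = Comp C (Comp C u y) w"
    using eq assoc[OF wa x ua] assoc[OF wa y ua] w u c d by simp
  moreover have "Comp C u x \<in> Arr C" "Comp C u y \<in> Arr C" using x y ua u c by auto
  moreover have "Dom C (Comp C u x) = Dom C (Comp C u y)" "Cod C (Comp C u x) = Cod C (Comp C u y)"
    using x y ua u c d by auto
  moreover have "Cod C w = Dom C (Comp C u x)" using x ua u w by auto
  ultimately obtain v where v: "v \<in> W" "Dom C v = Cod C (Comp C u x)"
    and veq: "Comp C v (Comp C u x) = Comp C v (Comp C u y)"
    using iii[of "Comp C u x" "Comp C u y" w] w by metis
  have va: "v \<in> Arr C" using v by simp
  have vu: "Comp C v u \<in> W" using cc[OF u(1) v(1)] v x ua u by simp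
  show ?thesis unfolding EE_def
  proof (rule bexI[OF _ vu], intro conjI)
    show "Dom C (Comp C v u) = Cod C x" using v ua va u x by simp
    show "Comp C (Comp C v u) x = Comp C (Comp C v u) y"
      using veq assoc[OF x ua va] assoc[OF y ua va] u v x ua c by simp
  qed
qed

lemma EE_precomp:
  assumes x: "x \<in> Arr C" and y: "y \<in> Arr C" and d: "Dom C x = Dom C y" and c: "Cod C x = Cod C y"
    and ga: "g \<in> Arr C" and gc: "Cod C g = Dom C x" and e: "EE x y"
  shows "EE (Comp C x g) (Comp C y g)"
proof -
  obtain u where u: "u \<in> W" "Dom C u = Cod C x" and eq: "Comp C u x = Comp C u y"
    using e unfolding EE_def by auto
  have ua: "u \<in> Arr C" using u by simp
  show ?thesis unfolding EE_def
  proof (rule bexI[OF _ u(1)], intro conjI)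
    show "Dom C u = Cod C (Comp C x g)" using u x ga gc by simp
    show "Comp C u (Comp C x g) = Comp C u (Comp C y g)"
      using eq assoc[OF ga x ua] assoc[OF ga y ua] u x ga gc c d by simp
  qed
qed

lemma EE_combine:
  assumes fin: "finite I" and Y: "Y \<in> Obj C"
    and xy: "\<forall>i\<in>I. x i \<in> Arr C \<and> y i \<in> Arr C \<and> Dom C (x i) = Dom C (y i) \<and> Cod C (x i) = Y \<and> Cod C (y i) = Y \<and> EE (x i) (y i)"
  shows "\<exists>u\<in>W. Dom C u = Y \<and> (\<forall>i\<in>I. Comp C u (x i) = Comp C u (y i))"
  using fin xy
proof (induction I rule: finite_induct)
  case empty
  show ?case by (rule bexI[of _ "Id C Y"]) (use Y in auto)
next
  case (insert j I)
  then obtain u1 where u1: "u1 \<in> W" "Dom C u1 = Y" and e1: "\<forall>i\<in>I. Comp C u1 (x i) = Comp C u1 (y i)"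
    by auto
  from insert.prems obtain u2 where u2: "u2 \<in> W" "Dom C u2 = Y" and e2: "Comp C u2 (x j) = Comp C u2 (y j)"
    unfolding EE_def by auto
  have u1a: "u1 \<in> Arr C" and u2a: "u2 \<in> Arr C" using u1 u2 by auto
  obtain f' w' where f': "f' \<in> Arr C" "w' \<in> W" "Dom C f' = Cod C u2" "Dom C w' = Cod C u1"
    "Cod C f' = Cod C w'" "Comp C f' u2 = Comp C w' u1" "u1 \<in> W \<Longrightarrow> f' \<in> W"
    using ii[OF u1a u2(1)] u1 u2 by metis
  have w'a: "w' \<in> Arr C" using f' by simp
  have U: "Comp C w' u1 \<in> W" using cc[OF u1(1) f'(2)] f' by simp
  show ?case
  proof (rule bexI[OF _ U], intro conjI ballI)
    show "Dom C (Comp C w' u1) = Y" using u1a w'a f' u1 by simp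
    fix i assume i: "i \<in> insert j I"
    show "Comp C (Comp C w' u1) (x i) = Comp C (Comp C w' u1) (y i)"
    proof (cases "i = j")
      case True
      have xa: "x j \<in> Arr C" "y j \<in> Arr C" "Cod C (x j) = Y" "Cod C (y j) = Y" using insert.prems by auto
      have "Comp C (Comp C w' u1) (x j) = Comp C (Comp C f' u2) (x j)" using f' by simp
      also have "\<dots> = Comp C f' (Comp C u2 (x j))" using assoc[OF xa(1) u2a f'(1)] xa u2 f' by simp
      also have "\<dots> = Comp C f' (Comp C u2 (y j))" using e2 by simp
      also have "\<dots> = Comp C (Comp C f' u2) (y j)" using assoc[OF xa(2) u2a f'(1)] xa u2 f' by simp
      also have "\<dots> = Comp C (Comp C w' u1) (y j)" using f' by simp
      finally show ?thesis using True by simp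
    next
      case False
      then have iI: "i \<in> I" using i by simp
      have xa: "x i \<in> Arr C" "y i \<in> Arr C" "Cod C (x i) = Y" "Cod C (y i) = Y" using insert.prems iI by auto
      have "Comp C (Comp C w' u1) (x i) = Comp C w' (Comp C u1 (x i))" using assoc[OF xa(1) u1a w'a] xa u1 f' by simp
      also have "\<dots> = Comp C w' (Comp C u1 (y i))" using e1 iI by simp
      also have "\<dots> = Comp C (Comp C w' u1) (y i)" using assoc[OF xa(2) u1a w'a] xa u1 f' by simp
      finally show ?thesis .
    qed
  qed
qed


definition cocone where
 "cocone G S Y lam \<longleftrightarrow> Y \<in> Obj C \<and>
   (\<forall>A\<in>S. lam A \<in> Arr C \<and> Dom C (lam A) = Dom C (G A A) \<and> Cod C (lam A) = Y) \<and>
   (\<forall>A\<in>S. \<forall>B\<in>S. A \<subseteq> B \<longrightarrow> Comp C (lam B) (G A B) = lam A)"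

lemma isfun_mono: "isfun C P le G \<Longrightarrow> P0 \<subseteq> P \<Longrightarrow> isfun C P0 le G"
  unfolding isfun_def by blast

lemma FC:
  assumes "finite S" "b \<in> S" "\<forall>A\<in>S. b \<subseteq> A" "isfun C S (\<subseteq>) G" "\<forall>A\<in>S. \<forall>B\<in>S. A \<subseteq> B \<longrightarrow> G A B \<in> W"
  shows "\<exists>Y lam. cocone G S Y lam \<and> (\<forall>A\<in>S. lam A \<in> W)"
  using assms
proof (induction "card S" arbitrary: S rule: less_induct)
  case less
  note fin = less.prems(1) and bS = less.prems(2) and bmin = less.prems(3) and G = less.prems(4)
    and GW = less.prems(5)
  show ?case
  proof (cases "S = {b}")
    case True
    have ba: "G b b \<in> Arr C" by (rule isfun_idarr[OF G bS])
    have "cocone G S (Dom C (G b b)) (\<lambda>_. G b b)" unfolding cocone_def True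
      using ba dom_obj[OF ba] isfun_cod[OF G bS bS] isfun_comp[OF G bS bS bS] by auto
    moreover have "\<forall>A\<in>S. G b b \<in> W" using GW bS True by auto
    ultimately show ?thesis by blast
  next
    case False
    have "S - {b} \<noteq> {}" using False bS by auto
    then obtain A where AS: "A \<in> S - {b}" and Amax: "\<forall>B\<in>S - {b}. A \<subseteq> B \<longrightarrow> A = B"
      using finite_has_maximal[of "S - {b}"] fin by blast
    have A: "A \<in> S" "A \<noteq> b" using AS by auto
    have Amax': "B \<in> S \<Longrightarrow> A \<subseteq> B \<Longrightarrow> B = A" for B
      using Amax bmin A by blast
    define S0 where "S0 = S - {A}"
    have S0S: "S0 \<subseteq> S" unfolding S0_def by auto
    have card: "card S0 < card S" unfolding S0_def by (rule card_Diff1_less[OF fin A(1)])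
    have bS0: "b \<in> S0" unfolding S0_def using bS A by auto
    obtain Y lam where co: "cocone G S0 Y lam" and lW: "\<forall>B\<in>S0. lam B \<in> W"
      using less.hyps[OF card _ bS0 _ isfun_mono[OF G S0S]] fin S0S bmin GW unfolding S0_def
      by (metis (no_types, lifting) finite_Diff subsetD)
    have Y: "Y \<in> Obj C" using co unfolding cocone_def by blast
    have lamA: "B \<in> S0 \<Longrightarrow> lam B \<in> Arr C \<and> Dom C (lam B) = Dom C (G B B) \<and> Cod C (lam B) = Y" for B
      using co unfolding cocone_def by blast
    have lamC: "B \<in> S0 \<Longrightarrow> B' \<in> S0 \<Longrightarrow> B \<subseteq> B' \<Longrightarrow> Comp C (lam B') (G B B') = lam B" for B B'
      using co unfolding cocone_def by blast
    have bA: "b \<subseteq> A" using bmin A by blast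
    have Gba: "G b A \<in> W" using GW bS A bA by blast
    have lb: "lam b \<in> W" using lW bS0 by blast
    have lba: "lam b \<in> Arr C" using lb by simp
    have dd: "Dom C (lam b) = Dom C (G b A)" using lamA[OF bS0] isfun_dom[OF G bS A(1) bA] by simp
    obtain f' w' where f': "f' \<in> Arr C" "w' \<in> W" "Dom C f' = Cod C (G b A)" "Dom C w' = Cod C (lam b)"
      "Cod C f' = Cod C w'" "Comp C f' (G b A) = Comp C w' (lam b)" "lam b \<in> W \<Longrightarrow> f' \<in> W"
      using ii[OF lba Gba dd] by metis
    have f'W: "f' \<in> W" using f'(7) lb by blast
    have w'a: "w' \<in> Arr C" using f' by simp
    have dw': "Dom C w' = Y" using f'(4) lamA[OF bS0] by simp
    have df': "Dom C f' = Dom C (G A A)" using f'(3) isfun_cod[OF G bS A(1) bA] by simp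
    define Y' where "Y' = Cod C w'"
    have Y': "Y' \<in> Obj C" unfolding Y'_def by (rule cod_obj[OF w'a])
    define I where "I = {B \<in> S0. B \<subseteq> A}"
    have finI: "finite I" unfolding I_def S0_def using fin by simp
    have EEI: "\<forall>B\<in>I. Comp C f' (G B A) \<in> Arr C \<and> Comp C w' (lam B) \<in> Arr C \<and>
        Dom C (Comp C f' (G B A)) = Dom C (Comp C w' (lam B)) \<and> Cod C (Comp C f' (G B A)) = Y' \<and>
        Cod C (Comp C w' (lam B)) = Y' \<and> EE (Comp C f' (G B A)) (Comp C w' (lam B))"
    proof
      fix B assume BI: "B \<in> I"
      then have B0: "B \<in> S0" and BA: "B \<subseteq> A" unfolding I_def by auto
      have BS: "B \<in> S" using B0 S0S by blast
      have bB: "b \<subseteq> B" using bmin BS by blast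
      have GBA: "G B A \<in> Arr C" "Dom C (G B A) = Dom C (G B B)" "Cod C (G B A) = Dom C (G A A)"
        using isfun_arr[OF G BS A(1) BA] isfun_dom[OF G BS A(1) BA] isfun_cod[OF G BS A(1) BA] by auto
      have GbB: "G b B \<in> W" "Cod C (G b B) = Dom C (G B B)" using GW bS BS bB isfun_cod[OF G bS BS bB] by auto
      have GbBa: "G b B \<in> Arr C" using GbB by simp
      have lB: "lam B \<in> Arr C" "Dom C (lam B) = Dom C (G B B)" "Cod C (lam B) = Y" using lamA[OF B0] by auto
      have x: "Comp C f' (G B A) \<in> Arr C" "Dom C (Comp C f' (G B A)) = Dom C (G B B)"
        "Cod C (Comp C f' (G B A)) = Y'"
        using GBA f' df' unfolding Y'_def by auto
      have y: "Comp C w' (lam B) \<in> Arr C" "Dom C (Comp C w' (lam B)) = Dom C (G B B)"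
        "Cod C (Comp C w' (lam B)) = Y'"
        using lB w'a dw' unfolding Y'_def by auto
      have "Comp C (Comp C f' (G B A)) (G b B) = Comp C f' (Comp C (G B A) (G b B))"
        using assoc[OF GbBa GBA(1) f'(1)] GBA GbB df' by simp
      also have "\<dots> = Comp C f' (G b A)" using isfun_comp[OF G bS BS A(1) bB BA bA] by simp
      also have "\<dots> = Comp C w' (lam b)" by (rule f'(6))
      also have "\<dots> = Comp C w' (Comp C (lam B) (G b B))" using lamC[OF bS0 B0 bB] by simp
      also have "\<dots> = Comp C (Comp C w' (lam B)) (G b B)"
        using assoc[OF GbBa lB(1) w'a] lB GbB dw' by simp
      finally have eq: "Comp C (Comp C f' (G B A)) (G b B) = Comp C (Comp C w' (lam B)) (G b B)" .
      have "EE (Comp C (Comp C f' (G B A)) (G b B)) (Comp C (Comp C w' (lam B)) (G b B))"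
        by (rule EE_eq[OF _ eq]) (use x GbBa GbB in simp)
      then have "EE (Comp C f' (G B A)) (Comp C w' (lam B))"
        using EE_cancel[OF x(1) y(1) _ _ GbB(1)] x y GbB by simp
      then show "Comp C f' (G B A) \<in> Arr C \<and> Comp C w' (lam B) \<in> Arr C \<and>
        Dom C (Comp C f' (G B A)) = Dom C (Comp C w' (lam B)) \<and> Cod C (Comp C f' (G B A)) = Y' \<and>
        Cod C (Comp C w' (lam B)) = Y' \<and> EE (Comp C f' (G B A)) (Comp C w' (lam B))"
        using x y by simp
    qed
    obtain u where u: "u \<in> W" "Dom C u = Y'"
      and ueq: "\<forall>B\<in>I. Comp C u (Comp C f' (G B A)) = Comp C u (Comp C w' (lam B))"
      using EE_combine[OF finI Y' EEI] by blast
    have ua: "u \<in> Arr C" using u by simp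
    define lam' where "lam' = (\<lambda>B. if B = A then Comp C u f' else Comp C u (Comp C w' (lam B)))"
    have lam'A: "lam' A = Comp C u f'" unfolding lam'_def by simp
    have lam'B: "B \<noteq> A \<Longrightarrow> lam' B = Comp C u (Comp C w' (lam B))" for B unfolding lam'_def by simp
    have S0iff: "B \<in> S0 \<longleftrightarrow> B \<in> S \<and> B \<noteq> A" for B unfolding S0_def by auto
    have arrs: "lam' B \<in> Arr C \<and> Dom C (lam' B) = Dom C (G B B) \<and> Cod C (lam' B) = Cod C u \<and> lam' B \<in> W"
      if BS: "B \<in> S" for B
    proof (cases "B = A")
      case True
      then show ?thesis using lam'A f' ua u df' f'W cc[OF f'W u(1)] unfolding Y'_def by auto
    next
      case False
      then have B0: "B \<in> S0" using BS S0iff by auto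
      have lB: "lam B \<in> Arr C" "Dom C (lam B) = Dom C (G B B)" "Cod C (lam B) = Y" "lam B \<in> W"
        using lamA[OF B0] lW B0 by auto
      have "Comp C w' (lam B) \<in> W" using cc[OF lB(4) f'(2)] lB dw' by simp
      then have "Comp C u (Comp C w' (lam B)) \<in> W" using cc[OF _ u(1)] lB w'a u dw' unfolding Y'_def by simp
      then show ?thesis using lam'B[OF False] lB w'a ua u dw' unfolding Y'_def by auto
    qed
    have "cocone G S (Cod C u) lam'"
      unfolding cocone_def
    proof (intro conjI ballI impI)
      show "Cod C u \<in> Obj C" by (rule cod_obj[OF ua])
    next
      fix B assume "B \<in> S"
      then show "lam' B \<in> Arr C" "Dom C (lam' B) = Dom C (G B B)" "Cod C (lam' B) = Cod C u"
        using arrs by blast+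
    next
      fix B B' assume BS: "B \<in> S" and B'S: "B' \<in> S" and BB': "B \<subseteq> B'"
      show "Comp C (lam' B') (G B B') = lam' B"
      proof (cases "B' = A")
        case True
        show ?thesis
        proof (cases "B = A")
          case True
          then show ?thesis using \<open>B' = A\<close> isfun_cid_r[OF G A(1), of "lam' A"] arrs[OF A(1)] by simp
        next
          case False
          then have BI: "B \<in> I" unfolding I_def using BS BB' \<open>B' = A\<close> S0iff by auto
          have BA: "B \<subseteq> A" using BB' True by simp
          have GBA: "G B A \<in> Arr C" "Cod C (G B A) = Dom C (G A A)"
            using isfun_arr[OF G BS A(1) BA] isfun_cod[OF G BS A(1) BA] by auto
          have "Comp C (lam' A) (G B A) = Comp C u (Comp C f' (G B A))"
            unfolding lam'A using assoc[OF GBA(1) f'(1) ua] GBA df' f' u unfolding Y'_def by simp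
          also have "\<dots> = Comp C u (Comp C w' (lam B))" using ueq BI by blast
          also have "\<dots> = lam' B" using lam'B[OF False] by simp
          finally show ?thesis using True by simp
        qed
      next
        case False
        have BnA: "B \<noteq> A" using Amax' B'S BB' False by blast
        have B0: "B \<in> S0" and B'0: "B' \<in> S0" using BS B'S BnA False S0iff by auto
        have lB': "lam B' \<in> Arr C" "Dom C (lam B') = Dom C (G B' B')" "Cod C (lam B') = Y" using lamA[OF B'0] by auto
        have GBB: "G B B' \<in> Arr C" "Cod C (G B B') = Dom C (G B' B')"
          using isfun_arr[OF G BS B'S BB'] isfun_cod[OF G BS B'S BB'] by auto
        have wl: "Comp C w' (lam B') \<in> Arr C" "Dom C (Comp C w' (lam B')) = Dom C (G B' B')"
          "Cod C (Comp C w' (lam B')) = Y'" using lB' w'a dw' unfolding Y'_def by auto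
        have "Comp C (lam' B') (G B B') = Comp C u (Comp C (Comp C w' (lam B')) (G B B'))"
          unfolding lam'B[OF False] using assoc[OF GBB(1) wl(1) ua] GBB wl u by simp
        also have "\<dots> = Comp C u (Comp C w' (Comp C (lam B') (G B B')))"
          using assoc[OF GBB(1) lB'(1) w'a] GBB lB' dw' by simp
        also have "\<dots> = lam' B" using lamC[OF B0 B'0 BB'] lam'B[OF BnA] by simp
        finally show ?thesis .
      qed
    qed
    moreover have "\<forall>B\<in>S. lam' B \<in> W" using arrs by blast
    ultimately show ?thesis by blast
  qed
qed

end



context plf begin

lemma cocone_ext:
  assumes G: "isfun C P' (\<subseteq>) G" and M: "marks W P' (\<subseteq>) Q G" and co: "cocone G P' Y lam"
    and N: "N \<notin> P'" and sub: "\<forall>A\<in>P'. A \<subseteq> N" and QN: "\<forall>A\<in>P'. Q A N \<longrightarrow> lam A \<in> W"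
  shows "\<exists>G'. isfun C (insert N P') (\<subseteq>) G' \<and> marks W (insert N P') (\<subseteq>) Q G' \<and>
     (\<forall>A\<in>P'. \<forall>B\<in>P'. A \<subseteq> B \<longrightarrow> G' A B = G A B)"
proof -
  have Y: "Y \<in> Obj C" using co unfolding cocone_def by blast
  have lamA: "A \<in> P' \<Longrightarrow> lam A \<in> Arr C \<and> Dom C (lam A) = Dom C (G A A) \<and> Cod C (lam A) = Y" for A
    using co unfolding cocone_def by blast
  have lamC: "A \<in> P' \<Longrightarrow> B \<in> P' \<Longrightarrow> A \<subseteq> B \<Longrightarrow> Comp C (lam B) (G A B) = lam A" for A B
    using co unfolding cocone_def by blast
  define G' where "G' = (\<lambda>A B. if B = N then (if A = N then Id C Y else lam A) else G A B)"
  have G'N: "G' N N = Id C Y" unfolding G'_def by simp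
  have G'A: "A \<noteq> N \<Longrightarrow> G' A N = lam A" for A unfolding G'_def by simp
  have G'G: "B \<noteq> N \<Longrightarrow> G' A B = G A B" for A B unfolding G'_def by simp
  have notN: "A \<in> P' \<Longrightarrow> A \<noteq> N" for A using N by blast
  have upN: "A \<in> insert N P' \<Longrightarrow> N \<subseteq> A \<Longrightarrow> A = N" for A using sub by blast
  show ?thesis
  proof (intro exI conjI)
    show "isfun C (insert N P') (\<subseteq>) G'" unfolding isfun_def
    proof (intro conjI ballI impI)
      fix A assume A: "A \<in> insert N P'"
      show "G' A A \<in> Arr C" "G' A A = Id C (Dom C (G' A A))"
      proof -
        have "G' A A \<in> Arr C \<and> G' A A = Id C (Dom C (G' A A))"
        proof (cases "A = N")
          case True then show ?thesis using G'N Y by simp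
        next
          case False
          then have A': "A \<in> P'" using A by simp
          show ?thesis using G'G[OF False, of A] isfun_idarr[OF G A'] isfun_id[OF G A'] by metis
        qed
        then show "G' A A \<in> Arr C" "G' A A = Id C (Dom C (G' A A))" by blast+
      qed
    next
      fix A B assume A: "A \<in> insert N P'" and B: "B \<in> insert N P'" and AB: "A \<subseteq> B"
      have "G' A B \<in> Arr C \<and> Dom C (G' A B) = Dom C (G' A A) \<and> Cod C (G' A B) = Dom C (G' B B)"
      proof (cases "B = N")
        case True
        show ?thesis
        proof (cases "A = N")
          case True then show ?thesis using \<open>B = N\<close> G'N Y by simp
        next
          case False
          then have A': "A \<in> P'" using A by simp
          show ?thesis using \<open>B = N\<close> G'A[OF False] G'N G'G[OF False, of A] lamA[OF A'] Y by simp
        qed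
      next
        case False
        then have B': "B \<in> P'" using B by simp
        have AnN: "A \<noteq> N" using upN[OF A] AB False B sub by blast
        then have A': "A \<in> P'" using A by simp
        show ?thesis using G'G[OF False] G'G[OF AnN, of A] G'G[OF False, of B]
          isfun_arr[OF G A' B' AB] isfun_dom[OF G A' B' AB] isfun_cod[OF G A' B' AB] by simp
      qed
      then show "G' A B \<in> Arr C" "Dom C (G' A B) = Dom C (G' A A)" "Cod C (G' A B) = Dom C (G' B B)" by blast+
    next
      fix A B D assume A: "A \<in> insert N P'" and B: "B \<in> insert N P'" and D: "D \<in> insert N P'"
        and AB: "A \<subseteq> B" and BD: "B \<subseteq> D" and AD: "A \<subseteq> D"
      show "Comp C (G' B D) (G' A B) = G' A D"
      proof (cases "D = N")
        case True
        show ?thesis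
        proof (cases "B = N")
          case True
          show ?thesis
          proof (cases "A = N")
            case True then show ?thesis using \<open>B = N\<close> \<open>D = N\<close> G'N Y comp_id_l[of "Id C Y" Y] by simp
          next
            case False
            then have A': "A \<in> P'" using A by simp
            show ?thesis using \<open>B = N\<close> \<open>D = N\<close> G'N G'A[OF False] lamA[OF A'] comp_id_l[of "lam A" Y] by simp
          qed
        next
          case False
          then have B': "B \<in> P'" using B by simp
          have AnN: "A \<noteq> N" using upN[OF A] AB False B sub by blast
          then have A': "A \<in> P'" using A by simp
          show ?thesis using \<open>D = N\<close> G'A[OF False] G'A[OF AnN] G'G[OF False] lamC[OF A' B' AB] by simp
        qed
      next
        case False
        then have D': "D \<in> P'" using D by simp
        have BnN: "B \<noteq> N" using upN[OF B] BD False D sub by blast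
        have AnN: "A \<noteq> N" using upN[OF A] AB BnN B sub by blast
        have A': "A \<in> P'" and B': "B \<in> P'" using A B AnN BnN by auto
        show ?thesis using G'G[OF False] G'G[OF BnN] isfun_comp[OF G A' B' D' AB BD AD] by simp
      qed
    qed
    show "marks W (insert N P') (\<subseteq>) Q G'" unfolding marks_def
    proof (intro ballI impI)
      fix A B assume A: "A \<in> insert N P'" and B: "B \<in> insert N P'" and AB: "A \<subseteq> B" and q: "Q A B"
      show "G' A B \<in> W"
      proof (cases "B = N")
        case True
        show ?thesis
        proof (cases "A = N")
          case True then show ?thesis using \<open>B = N\<close> G'N Y by simp
        next
          case False
          then have A': "A \<in> P'" using A by simp
          show ?thesis using \<open>B = N\<close> G'A[OF False] QN A' q by simp
        qed
      next
        case False
        then have B': "B \<in> P'" using B by simp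
        have AnN: "A \<noteq> N" using upN[OF A] AB False B sub by blast
        then have A': "A \<in> P'" using A by simp
        show ?thesis using G'G[OF False] M A' B' AB q unfolding marks_def by simp
      qed
    qed
    show "\<forall>A\<in>P'. \<forall>B\<in>P'. A \<subseteq> B \<longrightarrow> G' A B = G A B" using G'G notN by simp
  qed
qed

end



lemma Lp: "A \<in> Lposet n k \<longleftrightarrow> A \<subseteq> {0..n} \<and> k \<in> A"
  by (simp add: Lposet_def)

lemma fin_sub: "A \<subseteq> {0..n::nat} \<Longrightarrow> finite A"
  by (rule finite_subset[OF _ finite_atLeastAtMost])

lemma Max_top: "A \<subseteq> {0..n::nat} \<Longrightarrow> n \<in> A \<Longrightarrow> Max A = n"
  by (rule Max_eqI) (auto intro: fin_sub[of A n])

lemma Max_le_n: "A \<subseteq> {0..n::nat} \<Longrightarrow> A \<noteq> {} \<Longrightarrow> Max A \<le> n"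
proof -
  assume a: "A \<subseteq> {0..n}" "A \<noteq> {}"
  have "Max A \<in> A" by (rule Max_in[OF fin_sub[OF a(1)] a(2)])
  then show ?thesis using a(1) by auto
qed

lemma Max_in': "A \<subseteq> {0..n::nat} \<Longrightarrow> A \<noteq> {} \<Longrightarrow> Max A \<in> A"
  by (rule Max_in[OF fin_sub])

lemma Max_ge': "A \<subseteq> {0..n::nat} \<Longrightarrow> x \<in> A \<Longrightarrow> x \<le> Max A"
  by (rule Max_ge[OF fin_sub])

context plf begin

lemma Tstep:
  assumes n2: "2 \<le> n" and k0: "0 < k" and kn: "k < n"
    and G: "isfun C (Lposet n k - {{0..n}}) (\<subseteq>) G"
    and M: "marks W (Lposet n k - {{0..n}}) (\<subseteq>) (\<lambda>A0 A1. Max A0 = Max A1) G"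
    and co: "cocone G {A \<in> Lposet n k - {{0..n}}. n \<in> A} Y mu"
    and muW: "\<forall>A\<in>{A \<in> Lposet n k - {{0..n}}. n \<in> A}. mu A \<in> W"
  shows "\<exists>Y2 lam. cocone G (Lposet n k - {{0..n}}) Y2 lam \<and> (\<forall>A\<in>Lposet n k - {{0..n}}. n \<in> A \<longrightarrow> lam A \<in> W)"
proof -
  define N where "N = {0..n}"
  define T where "T = {0..n-1}"
  define L' where "L' = Lposet n k - {{0..n}}"
  define S where "S = {A \<in> L'. n \<in> A}"
  define U where "U = L' - {T}"
  note G = G[folded L'_def] and M = M[folded L'_def]
  have co: "cocone G S Y mu" using co unfolding S_def L'_def .
  have muW: "\<forall>A\<in>S. mu A \<in> W" using muW unfolding S_def L'_def .
  have L'iff: "A \<in> L' \<longleftrightarrow> A \<subseteq> N \<and> k \<in> A \<and> A \<noteq> N" for A unfolding L'_def N_def by (auto simp: Lp)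
  have NT: "N = insert n T" unfolding N_def T_def using n2 by auto
  have nT: "n \<notin> T" unfolding T_def using n2 by auto
  have TN: "T \<subseteq> N" using NT by blast
  have kT: "k \<in> T" unfolding T_def using kn by auto
  have TnN: "T \<noteq> N" using nT NT by blast
  have TL: "T \<in> L'" using L'iff[of T] TN kT TnN by blast
  have subT: "A \<subseteq> T" if "A \<in> L'" "n \<notin> A" for A
  proof -
    have "A \<subseteq> N" using that L'iff by blast
    then show ?thesis using that NT by blast
  qed
  have An: "insert n A \<in> S" if AL: "A \<in> L'" and nA: "n \<notin> A" and AT: "A \<noteq> T" for A
  proof -
    have a: "A \<subseteq> N" "k \<in> A" using AL L'iff by auto
    have nN: "n \<in> N" using NT by blast
    have "insert n A \<noteq> N"
    proof
      assume e: "insert n A = N"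
      have "T \<subseteq> insert n A" unfolding e by (rule TN)
      then have "T \<subseteq> A" using nT by (simp add: subset_insert)
      moreover have "A \<subseteq> T" by (rule subT[OF AL nA])
      ultimately show False using AT by blast
    qed
    then have "insert n A \<in> L'" using L'iff[of "insert n A"] a nN by blast
    then show ?thesis unfolding S_def by simp
  qed
  have Y: "Y \<in> Obj C" using co unfolding cocone_def by blast
  have muA: "A \<in> S \<Longrightarrow> mu A \<in> Arr C \<and> Dom C (mu A) = Dom C (G A A) \<and> Cod C (mu A) = Y" for A
    using co unfolding cocone_def by blast
  have muC: "A \<in> S \<Longrightarrow> B \<in> S \<Longrightarrow> A \<subseteq> B \<Longrightarrow> Comp C (mu B) (G A B) = mu A" for A B
    using co unfolding cocone_def by blast
  have SL: "S \<subseteq> L'" unfolding S_def by auto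
  have UL: "U \<subseteq> L'" unfolding U_def by auto
  have Ga: "A \<in> L' \<Longrightarrow> B \<in> L' \<Longrightarrow> A \<subseteq> B \<Longrightarrow> G A B \<in> Arr C \<and> Dom C (G A B) = Dom C (G A A) \<and> Cod C (G A B) = Dom C (G B B)" for A B
    using isfun_arr[OF G] isfun_dom[OF G] isfun_cod[OF G] by blast
  have Gc: "A \<in> L' \<Longrightarrow> B \<in> L' \<Longrightarrow> D \<in> L' \<Longrightarrow> A \<subseteq> B \<Longrightarrow> B \<subseteq> D \<Longrightarrow> Comp C (G B D) (G A B) = G A D" for A B D
    using isfun_comp[OF G] by blast
  have GW: "A \<in> L' \<Longrightarrow> B \<in> L' \<Longrightarrow> A \<subseteq> B \<Longrightarrow> Max A = Max B \<Longrightarrow> G A B \<in> W" for A B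
    using M unfolding marks_def by blast
  define lamS where "lamS = (\<lambda>A. if n \<in> A then mu A else Comp C (mu (insert n A)) (G A (insert n A)))"
  have lamSa: "lamS A \<in> Arr C \<and> Dom C (lamS A) = Dom C (G A A) \<and> Cod C (lamS A) = Y" if AU: "A \<in> U" for A
  proof (cases "n \<in> A")
    case True
    then have "A \<in> S" using AU UL unfolding S_def by auto
    then show ?thesis using muA True unfolding lamS_def by simp
  next
    case False
    have AL: "A \<in> L'" and AT: "A \<noteq> T" using AU unfolding U_def by auto
    have AS: "insert n A \<in> S" by (rule An[OF AL False AT])
    have AL2: "insert n A \<in> L'" using AS SL by blast
    have g: "G A (insert n A) \<in> Arr C" "Dom C (G A (insert n A)) = Dom C (G A A)"
      "Cod C (G A (insert n A)) = Dom C (G (insert n A) (insert n A))"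
      using Ga[OF AL AL2] by auto
    show ?thesis using False muA[OF AS] g unfolding lamS_def by simp
  qed
  have lamSC: "Comp C (lamS B) (G A B) = lamS A" if AU: "A \<in> U" and BU: "B \<in> U" and AB: "A \<subseteq> B" for A B
  proof (cases "n \<in> A")
    case True
    then have "n \<in> B" using AB by blast
    then have "A \<in> S" "B \<in> S" using True AU BU UL unfolding S_def by auto
    then show ?thesis using muC AB True \<open>n \<in> B\<close> unfolding lamS_def by simp
  next
    case False
    have AL: "A \<in> L'" and AT: "A \<noteq> T" using AU unfolding U_def by auto
    have BL: "B \<in> L'" using BU UL by blast
    have AS: "insert n A \<in> S" by (rule An[OF AL False AT])
    have AL2: "insert n A \<in> L'" using AS SL by blast
    have gA: "G A (insert n A) \<in> Arr C" "Cod C (G A (insert n A)) = Dom C (G (insert n A) (insert n A))"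
      using Ga[OF AL AL2] by auto
    show ?thesis
    proof (cases "n \<in> B")
      case True
      then have BS: "B \<in> S" using BU UL unfolding S_def by auto
      have sub: "insert n A \<subseteq> B" using AB True by blast
      have g2: "G (insert n A) B \<in> Arr C" "Dom C (G (insert n A) B) = Dom C (G (insert n A) (insert n A))"
        using Ga[OF AL2 BL sub] by auto
      have "Comp C (lamS B) (G A B) = Comp C (mu B) (Comp C (G (insert n A) B) (G A (insert n A)))"
        using True Gc[OF AL AL2 BL subset_insertI sub] unfolding lamS_def by simp
      also have "\<dots> = Comp C (Comp C (mu B) (G (insert n A) B)) (G A (insert n A))"
        using assoc[OF gA(1) g2(1), of "mu B"] muA[OF BS] gA g2 Ga[OF AL2 BL sub] by simp
      also have "\<dots> = lamS A" using muC[OF AS BS sub] False unfolding lamS_def by simp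
      finally show ?thesis .
    next
      case False2: False
      have BT: "B \<noteq> T" using BU unfolding U_def by auto
      have BS: "insert n B \<in> S" by (rule An[OF BL False2 BT])
      have BL2: "insert n B \<in> L'" using BS SL by blast
      have sub: "insert n A \<subseteq> insert n B" using AB by blast
      have gB: "G B (insert n B) \<in> Arr C" "Cod C (G B (insert n B)) = Dom C (G (insert n B) (insert n B))"
        using Ga[OF BL BL2] by auto
      have gAB: "G A B \<in> Arr C" "Cod C (G A B) = Dom C (G B B)" using Ga[OF AL BL AB] by auto
      have gAB2: "G (insert n A) (insert n B) \<in> Arr C"
        "Dom C (G (insert n A) (insert n B)) = Dom C (G (insert n A) (insert n A))"
        "Cod C (G (insert n A) (insert n B)) = Dom C (G (insert n B) (insert n B))"
        using Ga[OF AL2 BL2 sub] by auto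
      have dB: "Dom C (G B (insert n B)) = Dom C (G B B)" using Ga[OF BL BL2] by auto
      have mB: "mu (insert n B) \<in> Arr C" "Dom C (mu (insert n B)) = Dom C (G (insert n B) (insert n B))"
        using muA[OF BS] by auto
      have "Comp C (lamS B) (G A B) = Comp C (Comp C (mu (insert n B)) (G B (insert n B))) (G A B)"
        using False2 unfolding lamS_def by simp
      also have "\<dots> = Comp C (mu (insert n B)) (Comp C (G B (insert n B)) (G A B))"
        using assoc[OF gAB(1) gB(1) mB(1)] gAB gB mB dB by simp
      also have "\<dots> = Comp C (mu (insert n B)) (G A (insert n B))"
        using Gc[OF AL BL BL2 AB subset_insertI] by simp
      also have "\<dots> = Comp C (mu (insert n B)) (Comp C (G (insert n A) (insert n B)) (G A (insert n A)))"
        using Gc[OF AL AL2 BL2 subset_insertI sub] by auto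
      also have "\<dots> = Comp C (Comp C (mu (insert n B)) (G (insert n A) (insert n B))) (G A (insert n A))"
        using assoc[OF gA(1) gAB2(1) mB(1)] gA gAB2 mB by simp
      also have "\<dots> = lamS A" using muC[OF AS BS sub] False unfolding lamS_def by simp
      finally show ?thesis .
    qed
  qed
  have finL: "finite L'" 
  proof (rule finite_subset[of _ "Pow N"])
    show "L' \<subseteq> Pow N" using L'iff by blast
    show "finite (Pow N)" unfolding N_def by simp
  qed
  have n1: "0 < n - 1" using n2 by simp
  define B0 where "B0 = {k, n-1}"
  have B0N: "B0 \<subseteq> N" unfolding B0_def N_def using kn by auto
  have B0T': "B0 \<subseteq> {0..n-1}" unfolding B0_def using kn by auto
  have kB0: "k \<in> B0" unfolding B0_def by simp
  have zN: "0 \<in> N" unfolding N_def by simp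
  have zT: "0 \<in> T" unfolding T_def by simp
  have zB0: "0 \<notin> B0" unfolding B0_def using k0 n1 by auto
  have B0L: "B0 \<in> L'" using L'iff[of B0] B0N kB0 zN zB0 by blast
  have nB0: "n \<notin> B0" unfolding B0_def using kn n2 by auto
  have B0nT: "B0 \<noteq> T" using zT zB0 by blast
  have B0U: "B0 \<in> U" unfolding U_def using B0L B0nT by blast
  have B0sT: "B0 \<subseteq> T" using B0T' unfolding T_def .
  have MaxB0: "Max B0 = n - 1" by (rule Max_top[OF B0T']) (simp add: B0_def)
  have MaxT: "Max T = n - 1" unfolding T_def by (rule Max_top) auto
  have w0: "G B0 T \<in> W" using GW[OF B0L TL B0sT] MaxB0 MaxT by simp
  have lB0: "lamS B0 \<in> Arr C" "Dom C (lamS B0) = Dom C (G B0 B0)" "Cod C (lamS B0) = Y" using lamSa[OF B0U] by auto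
  have gB0T: "G B0 T \<in> Arr C" "Dom C (G B0 T) = Dom C (G B0 B0)" "Cod C (G B0 T) = Dom C (G T T)"
    using Ga[OF B0L TL B0sT] by auto
  have dd: "Dom C (lamS B0) = Dom C (G B0 T)" using lB0 gB0T by simp
  obtain l0 v0 where l0: "l0 \<in> Arr C" "v0 \<in> W" "Dom C l0 = Cod C (G B0 T)" "Dom C v0 = Cod C (lamS B0)"
    "Cod C l0 = Cod C v0" "Comp C l0 (G B0 T) = Comp C v0 (lamS B0)"
    using ii[OF lB0(1) w0 dd] by metis
  have v0a: "v0 \<in> Arr C" using l0 by simp
  have dl0: "Dom C l0 = Dom C (G T T)" using l0 gB0T by simp
  have dv0: "Dom C v0 = Y" using l0 lB0 by simp
  define Y' where "Y' = Cod C v0"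
  have Y': "Y' \<in> Obj C" unfolding Y'_def by (rule cod_obj[OF v0a])
  define x where "x = (\<lambda>A. Comp C l0 (G A T))"
  define y where "y = (\<lambda>A. Comp C v0 (lamS A))"
  define V where "V = {A \<in> U. n \<notin> A}"
  have VL: "A \<in> V \<Longrightarrow> A \<in> L'" for A unfolding V_def U_def by auto
  have VU: "A \<in> V \<Longrightarrow> A \<in> U" for A unfolding V_def by auto
  have VT: "A \<in> V \<Longrightarrow> A \<subseteq> T" for A using subT VL unfolding V_def by auto
  have xya: "x A \<in> Arr C \<and> y A \<in> Arr C \<and> Dom C (x A) = Dom C (y A) \<and> Dom C (x A) = Dom C (G A A) \<and>
      Cod C (x A) = Y' \<and> Cod C (y A) = Y'" if AV: "A \<in> V" for A
  proof -
    have g: "G A T \<in> Arr C" "Dom C (G A T) = Dom C (G A A)" "Cod C (G A T) = Dom C (G T T)"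
      using Ga[OF VL[OF AV] TL VT[OF AV]] by auto
    have l: "lamS A \<in> Arr C" "Dom C (lamS A) = Dom C (G A A)" "Cod C (lamS A) = Y" using lamSa[OF VU[OF AV]] by auto
    show ?thesis unfolding x_def y_def Y'_def using g l l0 dl0 dv0 v0a by simp
  qed
  have xyr: "Comp C (x A') (G A A') = x A \<and> Comp C (y A') (G A A') = y A"
    if AV: "A \<in> V" and A'V: "A' \<in> V" and AA': "A \<subseteq> A'" for A A'
  proof -
    have AL: "A \<in> L'" and A'L: "A' \<in> L'" using VL AV A'V by auto
    have g: "G A A' \<in> Arr C" "Cod C (G A A') = Dom C (G A' A')" using Ga[OF AL A'L AA'] by auto
    have g2: "G A' T \<in> Arr C" "Dom C (G A' T) = Dom C (G A' A')" "Cod C (G A' T) = Dom C (G T T)"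
      using Ga[OF A'L TL VT[OF A'V]] by auto
    have l: "lamS A' \<in> Arr C" "Dom C (lamS A') = Dom C (G A' A')" "Cod C (lamS A') = Y"
      using lamSa[OF VU[OF A'V]] by auto
    have "Comp C (x A') (G A A') = Comp C l0 (Comp C (G A' T) (G A A'))"
      unfolding x_def using assoc[OF g(1) g2(1) l0(1)] g g2 dl0 by simp
    also have "\<dots> = x A" unfolding x_def using Gc[OF AL A'L TL AA' VT[OF A'V]] by simp
    finally have 1: "Comp C (x A') (G A A') = x A" .
    have "Comp C (y A') (G A A') = Comp C v0 (Comp C (lamS A') (G A A'))"
      unfolding y_def using assoc[OF g(1) l(1) v0a] g l dv0 by simp
    also have "\<dots> = y A" unfolding y_def using lamSC[OF VU[OF AV] VU[OF A'V] AA'] by simp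
    finally show ?thesis using 1 by simp
  qed
  have B0V: "B0 \<in> V" unfolding V_def using B0U nB0 by simp
  have stepA: "EE (x A) (y A)" if AV: "A \<in> V" and BA: "B0 \<subseteq> A" for A
  proof -
    have AL: "A \<in> L'" using VL AV by auto
    have AT': "A \<subseteq> {0..n-1}" using VT[OF AV] unfolding T_def .
    have "n - 1 \<in> A" using BA unfolding B0_def by auto
    then have MA: "Max A = n - 1" by (rule Max_top[OF AT'])
    have gW: "G B0 A \<in> W" using GW[OF B0L AL BA] MA MaxB0 by simp
    have gc: "Cod C (G B0 A) = Dom C (G A A)" using Ga[OF B0L AL BA] by simp
    have "Comp C (x A) (G B0 A) = Comp C (y A) (G B0 A)"
      using xyr[OF B0V AV BA] l0(6) unfolding x_def y_def by simp
    then have "EE (Comp C (x A) (G B0 A)) (Comp C (y A) (G B0 A))"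
      using xyr[OF B0V AV BA] xya[OF B0V] by (intro EE_eq) auto
    moreover have xa: "x A \<in> Arr C" "y A \<in> Arr C" "Dom C (x A) = Dom C (y A)" "Cod C (x A) = Cod C (y A)"
      "Dom C (x A) = Dom C (G A A)" using xya[OF AV] by auto
    moreover have "Cod C (G B0 A) = Dom C (x A)" using gc xa by simp
    ultimately show ?thesis using EE_cancel[OF xa(1-4) gW] by blast
  qed
  have stepB: "EE (x A) (y A)" if AV: "A \<in> V" for A
  proof -
    have AL: "A \<in> L'" using VL AV by auto
    have AT': "A \<subseteq> {0..n-1}" using VT[OF AV] unfolding T_def .
    have kA: "k \<in> A" using AL L'iff by blast
    then have Ane: "A \<noteq> {}" by blast
    define m where "m = Max A"
    have mA: "m \<in> A" unfolding m_def by (rule Max_in'[OF AT' Ane])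
    have mle: "m \<le> n - 1" using mA AT' by auto
    have km: "k \<le> m" unfolding m_def by (rule Max_ge'[OF AT' kA])
    define D where "D = {k, m}"
    define D' where "D' = {k, m, n-1}"
    have DV: "D \<in> V" and D'V: "D' \<in> V"
    proof -
      have a: "D \<subseteq> N" "D' \<subseteq> N" unfolding D_def D'_def N_def using mle kn by auto
      have b: "k \<in> D" "k \<in> D'" unfolding D_def D'_def by auto
      have c: "0 \<notin> D" "0 \<notin> D'" unfolding D_def D'_def using k0 km n1 by auto
      have d: "n \<notin> D" "n \<notin> D'" unfolding D_def D'_def using kn mle n2 by auto
      have "D \<in> L'" "D' \<in> L'" using L'iff a b c zN by blast+
      moreover have "D \<noteq> T" "D' \<noteq> T" using c zT by blast+
      ultimately show "D \<in> V" "D' \<in> V" unfolding V_def U_def using d by blast+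
    qed
    have DA: "D \<subseteq> A" unfolding D_def using kA mA by auto
    have DD': "D \<subseteq> D'" unfolding D_def D'_def by auto
    have BD': "B0 \<subseteq> D'" unfolding B0_def D'_def by auto
    have MD: "Max D = m" by (rule Max_top[of D m]) (auto simp: D_def km)
    have gW: "G D A \<in> W" using GW[OF VL[OF DV] AL DA] MD unfolding m_def by simp
    have gDA: "Cod C (G D A) = Dom C (G A A)" using Ga[OF VL[OF DV] AL DA] by simp
    have gDD: "G D D' \<in> Arr C" "Cod C (G D D') = Dom C (G D' D')" using Ga[OF VL[OF DV] VL[OF D'V] DD'] by auto
    have e1: "EE (x D') (y D')" by (rule stepA[OF D'V BD'])
    have xa': "x D' \<in> Arr C" "y D' \<in> Arr C" "Dom C (x D') = Dom C (y D')" "Cod C (x D') = Cod C (y D')"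
      "Dom C (x D') = Dom C (G D' D')" using xya[OF D'V] by auto
    have gc': "Cod C (G D D') = Dom C (x D')" using gDD xa' by simp
    have "EE (Comp C (x D') (G D D')) (Comp C (y D') (G D D'))"
      by (rule EE_precomp[OF xa'(1-4) gDD(1) gc' e1])
    then have "EE (x D) (y D)" using xyr[OF DV D'V DD'] by simp
    then have "EE (Comp C (x A) (G D A)) (Comp C (y A) (G D A))" using xyr[OF DV AV DA] by simp
    moreover have xa: "x A \<in> Arr C" "y A \<in> Arr C" "Dom C (x A) = Dom C (y A)" "Cod C (x A) = Cod C (y A)"
      "Dom C (x A) = Dom C (G A A)" using xya[OF AV] by auto
    moreover have "Cod C (G D A) = Dom C (x A)" using gDA xa by simp
    ultimately show ?thesis using EE_cancel[OF xa(1-4) gW] by blast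
  qed
  have finV: "finite V" using finL unfolding V_def U_def by simp
  obtain u where u: "u \<in> W" "Dom C u = Y'" and ueq: "\<forall>A\<in>V. Comp C u (x A) = Comp C u (y A)"
    using EE_combine[OF finV Y', of x y] xya stepB by blast
  have ua: "u \<in> Arr C" using u by simp
  define lam where "lam = (\<lambda>A. if A = T then Comp C u l0 else Comp C u (Comp C v0 (lamS A)))"
  have lamT: "lam T = Comp C u l0" unfolding lam_def by simp
  have lamU: "A \<noteq> T \<Longrightarrow> lam A = Comp C u (Comp C v0 (lamS A))" for A unfolding lam_def by simp
  have LU: "A \<in> L' \<Longrightarrow> A \<noteq> T \<Longrightarrow> A \<in> U" for A unfolding U_def by simp
  have lama: "lam A \<in> Arr C \<and> Dom C (lam A) = Dom C (G A A) \<and> Cod C (lam A) = Cod C u" if AL: "A \<in> L'" for A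
  proof (cases "A = T")
    case True
    then show ?thesis using lamT l0 ua u dl0 unfolding Y'_def by simp
  next
    case False
    have l: "lamS A \<in> Arr C" "Dom C (lamS A) = Dom C (G A A)" "Cod C (lamS A) = Y" using lamSa[OF LU[OF AL False]] by auto
    show ?thesis using lamU[OF False] l v0a dv0 ua u unfolding Y'_def by simp
  qed
  have "cocone G L' (Cod C u) lam" unfolding cocone_def
  proof (intro conjI ballI impI)
    show "Cod C u \<in> Obj C" by (rule cod_obj[OF ua])
  next
    fix A assume "A \<in> L'"
    then show "lam A \<in> Arr C" "Dom C (lam A) = Dom C (G A A)" "Cod C (lam A) = Cod C u" using lama by blast+
  next
    fix A B assume AL: "A \<in> L'" and BL: "B \<in> L'" and AB: "A \<subseteq> B"
    show "Comp C (lam B) (G A B) = lam A"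
    proof (cases "B = T")
      case True
      show ?thesis
      proof (cases "A = T")
        case True
        then show ?thesis using \<open>B = T\<close> isfun_cid_r[OF G TL, of "lam T"] lama[OF TL] by simp
      next
        case False
        have AV: "A \<in> V" unfolding V_def using LU[OF AL False] AB True nT by blast
        have g: "G A T \<in> Arr C" "Cod C (G A T) = Dom C (G T T)" using Ga[OF AL TL] AB True by auto
        have "Comp C (lam B) (G A B) = Comp C u (x A)"
          unfolding True lamT x_def using assoc[OF g(1) l0(1) ua] g dl0 l0 u unfolding Y'_def by simp
        also have "\<dots> = Comp C u (y A)" using ueq AV by blast
        also have "\<dots> = lam A" unfolding y_def using lamU[OF False] by simp
        finally show ?thesis .
      qed
    next
      case False
      have AnT: "A \<noteq> T"
      proof
        assume AT: "A = T"
        show False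
        proof (cases "n \<in> B")
          case True
          then have "N \<subseteq> B" using NT AB AT by blast
          then show False using L'iff BL by blast
        next
          case False
          then have "B \<subseteq> T" by (rule subT[OF BL])
          then show False using AB AT \<open>B \<noteq> T\<close> by blast
        qed
      qed
      have AU: "A \<in> U" and BU: "B \<in> U" using LU AL BL AnT False by auto
      have g: "G A B \<in> Arr C" "Cod C (G A B) = Dom C (G B B)" using Ga[OF AL BL AB] by auto
      have l: "lamS B \<in> Arr C" "Dom C (lamS B) = Dom C (G B B)" "Cod C (lamS B) = Y" using lamSa[OF BU] by auto
      have vl: "Comp C v0 (lamS B) \<in> Arr C" "Dom C (Comp C v0 (lamS B)) = Dom C (G B B)"
        "Cod C (Comp C v0 (lamS B)) = Y'" using l v0a dv0 unfolding Y'_def by auto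
      have "Comp C (lam B) (G A B) = Comp C u (Comp C (Comp C v0 (lamS B)) (G A B))"
        unfolding lamU[OF False] using assoc[OF g(1) vl(1) ua] g vl u by simp
      also have "\<dots> = Comp C u (Comp C v0 (Comp C (lamS B) (G A B)))"
        using assoc[OF g(1) l(1) v0a] g l dv0 by simp
      also have "\<dots> = lam A" using lamSC[OF AU BU AB] lamU[OF AnT] by simp
      finally show ?thesis .
    qed
  qed
  moreover have "\<forall>A\<in>L'. n \<in> A \<longrightarrow> lam A \<in> W"
  proof (intro ballI impI)
    fix A assume AL: "A \<in> L'" and nA: "n \<in> A"
    have AnT: "A \<noteq> T" using nA nT by blast
    have AS: "A \<in> S" unfolding S_def using AL nA by simp
    have m: "mu A \<in> W" "Cod C (mu A) = Y" using muW AS muA by auto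
    have "Comp C v0 (mu A) \<in> W" using cc[OF m(1) l0(2)] m dv0 by simp
    moreover have "Cod C (Comp C v0 (mu A)) = Dom C u" using m v0a dv0 u unfolding Y'_def by simp
    ultimately have "Comp C u (Comp C v0 (mu A)) \<in> W" using cc[OF _ u(1)] by simp
    then show "lam A \<in> W" using lamU[OF AnT] nA unfolding lamS_def by simp
  qed
  ultimately show ?thesis unfolding L'_def by blast
qed


end


context plf begin
lemma main_L:
  assumes n2: "2 \<le> n" and k0: "0 < k" and kn: "k \<le> n"
  shows "flift C W (Lposet n k - {{0..n}}) (\<subseteq>) (Lposet n k) (\<subseteq>) (\<lambda>A0 A1. Max A0 = Max A1)"
  unfolding flift_def
proof (intro allI impI, elim conjE)
  fix G
  assume G0: "isfun C (Lposet n k - {{0..n}}) (\<subseteq>) G"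
    and M0: "marks W (Lposet n k - {{0..n}}) (\<subseteq>) (\<lambda>A0 A1. Max A0 = Max A1) G"
  define N where "N = {0..n}"
  define L' where "L' = Lposet n k - {{0..n}}"
  define S where "S = {A \<in> L'. n \<in> A}"
  have G: "isfun C L' (\<subseteq>) G" using G0 unfolding L'_def .
  have M: "marks W L' (\<subseteq>) (\<lambda>A0 A1. Max A0 = Max A1) G" using M0 unfolding L'_def .
  have L'iff: "A \<in> L' \<longleftrightarrow> A \<subseteq> N \<and> k \<in> A \<and> A \<noteq> N" for A unfolding L'_def N_def by (auto simp: Lp)
  have finL: "finite L'"
  proof (rule finite_subset[of _ "Pow N"])
    show "L' \<subseteq> Pow N" using L'iff by blast
    show "finite (Pow N)" unfolding N_def by simp
  qed
  have SL: "S \<subseteq> L'" unfolding S_def by auto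
  have finS: "finite S" using finL SL finite_subset by blast
  define b where "b = {k, n}"
  have zN: "0 \<in> N" unfolding N_def by simp
  have bS: "b \<in> S"
  proof -
    have "b \<subseteq> N" "k \<in> b" "0 \<notin> b" unfolding b_def N_def using kn k0 n2 by auto
    then have "b \<in> L'" using L'iff[of b] zN by blast
    then show ?thesis unfolding S_def b_def by simp
  qed
  have bmin: "\<forall>A\<in>S. b \<subseteq> A"
  proof
    fix A assume "A \<in> S"
    then have "A \<in> L'" "n \<in> A" unfolding S_def by auto
    then have "k \<in> A" "n \<in> A" using L'iff by blast+
    then show "b \<subseteq> A" unfolding b_def by simp
  qed
  have GS: "isfun C S (\<subseteq>) G" by (rule isfun_mono[OF G SL])
  have MaxS: "Max A = n" if "A \<in> S" for A
  proof -
    have "A \<in> L'" "n \<in> A" using that unfolding S_def by auto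
    then have "A \<subseteq> {0..n}" "n \<in> A" using L'iff unfolding N_def by blast+
    then show ?thesis by (rule Max_top)
  qed
  have GWS: "\<forall>A\<in>S. \<forall>B\<in>S. A \<subseteq> B \<longrightarrow> G A B \<in> W"
  proof (intro ballI impI)
    fix A B assume A: "A \<in> S" and B: "B \<in> S" and AB: "A \<subseteq> B"
    have "Max A = Max B" using MaxS[OF A] MaxS[OF B] by simp
    moreover have "A \<in> L'" "B \<in> L'" using A B SL by auto
    ultimately show "G A B \<in> W" using M AB unfolding marks_def by blast
  qed
  obtain Y mu where co: "cocone G S Y mu" and muW: "\<forall>A\<in>S. mu A \<in> W"
    using FC[OF finS bS bmin GS GWS] by blast
  have "\<exists>Y2 lam. cocone G L' Y2 lam \<and> (\<forall>A\<in>L'. n \<in> A \<longrightarrow> lam A \<in> W)"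
  proof (cases "k = n")
    case True
    have "A \<in> S" if "A \<in> L'" for A
    proof -
      have "k \<in> A" using that L'iff by blast
      then show ?thesis unfolding S_def using that True by simp
    qed
    then have "S = L'" using SL by blast
    then show ?thesis using co muW by blast
  next
    case False
    then have kn': "k < n" using kn by simp
    show ?thesis using Tstep[OF n2 k0 kn' G0 M0] co muW unfolding S_def L'_def by blast
  qed
  then obtain Y2 lam where co2: "cocone G L' Y2 lam" and lW: "\<forall>A\<in>L'. n \<in> A \<longrightarrow> lam A \<in> W" by blast
  have NL: "N \<notin> L'" using L'iff by blast
  have sub: "\<forall>A\<in>L'. A \<subseteq> N" using L'iff by blast
  have MaxN: "Max N = n" unfolding N_def by (rule Max_top) auto
  have QN: "\<forall>A\<in>L'. Max A = Max N \<longrightarrow> lam A \<in> W"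
  proof (intro ballI impI)
    fix A assume AL: "A \<in> L'" and e: "Max A = Max N"
    have "A \<subseteq> {0..n}" "A \<noteq> {}" using AL L'iff unfolding N_def by auto
    then have "Max A \<in> A" by (rule Max_in')
    then have "n \<in> A" using e MaxN by simp
    then show "lam A \<in> W" using lW AL by blast
  qed
  obtain G' where G': "isfun C (insert N L') (\<subseteq>) G'" and M': "marks W (insert N L') (\<subseteq>) (\<lambda>A0 A1. Max A0 = Max A1) G'"
    and ag: "\<forall>A\<in>L'. \<forall>B\<in>L'. A \<subseteq> B \<longrightarrow> G' A B = G A B"
    using cocone_ext[OF G M co2 NL sub] QN by blast
  have NP: "{0..n} \<in> Lposet n k" unfolding Lp using kn by simp
  have ins: "insert N L' = Lposet n k" unfolding L'_def N_def by (rule insert_Diff[OF NP])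
  have G'': "isfun C (Lposet n k) (\<subseteq>) G'" using G' unfolding ins .
  have M'': "marks W (Lposet n k) (\<subseteq>) (\<lambda>A0 A1. Max A0 = Max A1) G'" using M' unfolding ins .
  have ag': "\<forall>A\<in>Lposet n k - {{0..n}}. \<forall>B\<in>Lposet n k - {{0..n}}. A \<subseteq> B \<longrightarrow> G' A B = G A B"
    using ag unfolding L'_def .
  show "\<exists>G'. isfun C (Lposet n k) (\<subseteq>) G' \<and> marks W (Lposet n k) (\<subseteq>) (\<lambda>A0 A1. Max A0 = Max A1) G' \<and>
      (\<forall>A\<in>Lposet n k - {{0..n}}. \<forall>B\<in>Lposet n k - {{0..n}}. A \<subseteq> B \<longrightarrow> G' A B = G A B)"
    using G'' M'' ag' by blast
qed

end



lemma isfun_pull: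
  assumes H: "isfun C P0 le0 H" and cP: "\<forall>A\<in>P. c A \<in> P0"
    and mo: "\<forall>A\<in>P. \<forall>B\<in>P. le A B \<longrightarrow> le0 (c A) (c B)"
  shows "isfun C P le (\<lambda>A B. H (c A) (c B))"
  using H cP mo unfolding isfun_def by blast

definition le0 :: "nat \<Rightarrow> nat \<Rightarrow> bool" where
  "le0 x y \<longleftrightarrow> x mod 2 \<le> y mod 2 \<and> (x div 2) mod 2 \<le> (y div 2) mod 2 \<and> x div 4 \<le> y div 4"

definition code3 :: "nat set \<Rightarrow> nat" where
  "code3 A = (if 0 \<in> A then 1 else 0) + (if 2 \<in> A then 2 else 0) + (if 3 \<in> A then 4 else 0)"

definition code2 :: "nat \<Rightarrow> nat set \<Rightarrow> nat" where
  "code2 j A = (if 0 \<in> A then 1 else 0) + (if j \<in> A then 2 else 0)"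

lemma code3_mono: "A \<subseteq> B \<Longrightarrow> le0 (code3 A) (code3 B)"
  unfolding le0_def code3_def by (auto split: if_splits)

lemma code2_mono: "A \<subseteq> B \<Longrightarrow> le0 (code2 j A) (code2 j B)"
  unfolding le0_def code2_def by (auto split: if_splits)

lemma code3_range: "A \<in> Lposet 3 1 - {{0..3}} \<Longrightarrow> code3 A \<in> {0..6}"
proof -
  assume a: "A \<in> Lposet 3 1 - {{0..3}}"
  then have s: "A \<subseteq> {0..3}" and o: "1 \<in> A" and nf: "A \<noteq> {0..3}" unfolding Lposet_def by auto
  have "\<not> (0 \<in> A \<and> 2 \<in> A \<and> 3 \<in> A)"
  proof
    assume "0 \<in> A \<and> 2 \<in> A \<and> 3 \<in> A"
    then have "{0..3} \<subseteq> A" using o by (auto simp: atLeastAtMost_iff le_Suc_eq numeral_3_eq_3 numeral_2_eq_2)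
    then show False using s nf by blast
  qed
  then show ?thesis unfolding code3_def by auto
qed

lemma code2_range: "k \<in> {1,2} \<Longrightarrow> A \<in> Lposet 2 k - {{0..2}} \<Longrightarrow> code2 (3 - k) A \<in> {0,1,2}"
proof -
  assume k: "k \<in> {1,2}" and a: "A \<in> Lposet 2 k - {{0..2}}"
  then have s: "A \<subseteq> {0..2}" and o: "k \<in> A" and nf: "A \<noteq> {0..2}" unfolding Lposet_def by auto
  have "\<not> (0 \<in> A \<and> 3 - k \<in> A)"
  proof
    assume "0 \<in> A \<and> 3 - k \<in> A"
    then have "{0..2} \<subseteq> A" using o k by (auto simp: atLeastAtMost_iff le_Suc_eq numeral_2_eq_2)
    then show False using s nf by blast
  qed
  then show ?thesis unfolding code2_def by auto
qed


context mcat begin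

lemma conv_ii_k:
  assumes k: "k \<in> {1,2}"
    and F: "flift C W (Lposet 2 k - {{0..2}}) (\<subseteq>) (Lposet 2 k) (\<subseteq>) (\<lambda>A0 A1. Max A0 = Max A1)"
    and f: "f \<in> Arr C" and w: "w \<in> W" and fw: "Dom C f = Dom C w" and f2: "k = 2 \<Longrightarrow> f \<in> W"
  shows "\<exists>f' w'. f' \<in> Arr C \<and> w' \<in> W \<and> Dom C f' = Cod C w \<and> Dom C w' = Cod C f \<and>
     Cod C f' = Cod C w' \<and> Comp C f' w = Comp C w' f \<and> (k = 2 \<longrightarrow> f' \<in> W)"
proof -
  define j where "j = 3 - k"
  have jk: "j \<noteq> k" "j \<noteq> 0" "k \<noteq> 0" "j \<le> 2" "k \<le> 2" "{k, j} = {1,2}" using k unfolding j_def by auto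
  have wa: "w \<in> Arr C" using w by simp
  define ob where "ob = (\<lambda>x::nat. if x = 0 then Dom C w else if x = 1 then Cod C w else Cod C f)"
  define H where "H = (\<lambda>x y::nat. if x = y then Id C (ob x) else if y = 1 then w else f)"
  have obO: "ob x \<in> Obj C" for x unfolding ob_def using wa f by (auto intro: dom_obj cod_obj)
  define P0 where "P0 = {0::nat,1,2}"
  have lec: "x \<in> P0 \<Longrightarrow> y \<in> P0 \<Longrightarrow> le0 x y \<Longrightarrow> x = y \<or> (x = 0 \<and> y = 1) \<or> (x = 0 \<and> y = 2)" for x y
    unfolding P0_def le0_def by (elim insertE emptyE; simp)
  have Ha: "H x y \<in> Arr C \<and> Dom C (H x y) = ob x \<and> Cod C (H x y) = ob y"
    if "x \<in> P0" "y \<in> P0" "le0 x y" for x y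
    using lec[OF that] obO[of x] wa f fw unfolding H_def ob_def by auto
  have HI: "H x x = Id C (ob x)" for x unfolding H_def by simp
  have HF: "isfun C P0 le0 H" unfolding isfun_def
  proof (intro conjI ballI impI)
    fix x assume "x \<in> P0"
    show "H x x \<in> Arr C" "H x x = Id C (Dom C (H x x))" unfolding HI using obO[of x] by auto
  next
    fix x y assume "x \<in> P0" "y \<in> P0" "le0 x y"
    then show "H x y \<in> Arr C" "Dom C (H x y) = Dom C (H x x)" "Cod C (H x y) = Dom C (H y y)"
      using Ha unfolding HI using obO by auto
  next
    fix x y z assume xyz: "x \<in> P0" "y \<in> P0" "z \<in> P0" "le0 x y" "le0 y z" "le0 x z"
    have "x = y \<or> y = z" using lec[OF xyz(1,2,4)] lec[OF xyz(2,3,5)] by auto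
    then show "Comp C (H y z) (H x y) = H x z"
    proof
      assume "x = y"
      then show ?thesis using Ha[OF xyz(1,3,6)] comp_id_r[of "H x z" "ob x"] by (simp add: HI)
    next
      assume "y = z"
      then show ?thesis using Ha[OF xyz(1,3,6)] comp_id_l[of "H x z" "ob z"] by (simp add: HI)
    qed
  qed
  define L' where "L' = Lposet 2 k - {{0..2}}"
  define G where "G = (\<lambda>A B. H (code2 j A) (code2 j B))"
  have cP: "\<forall>A\<in>L'. code2 j A \<in> P0" using code2_range[OF k] unfolding L'_def P0_def j_def by blast
  have GF: "isfun C L' (\<subseteq>) G" unfolding G_def
    by (rule isfun_pull[OF HF cP]) (auto intro: code2_mono)
  have GM: "marks W L' (\<subseteq>) (\<lambda>A0 A1. Max A0 = Max A1) G" unfolding marks_def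
  proof (intro ballI impI)
    fix A B assume A: "A \<in> L'" and B: "B \<in> L'" and AB: "A \<subseteq> B" and q: "Max A = Max B"
    have cA: "code2 j A \<in> P0" and cB: "code2 j B \<in> P0" using cP A B by auto
    have l: "le0 (code2 j A) (code2 j B)" by (rule code2_mono[OF AB])
    show "G A B \<in> W"
    proof (cases "code2 j A = 0 \<and> code2 j B = 2")
      case False
      then show ?thesis using lec[OF cA cB l] w obO unfolding G_def H_def by auto
    next
      case True
      show ?thesis
      proof (cases "k = 2")
        case True then show ?thesis using f2 \<open>code2 j A = 0 \<and> code2 j B = 2\<close> unfolding G_def H_def by simp
      next
        case False
        then have k1: "k = 1" "j = 2" using k unfolding j_def by auto
        have As: "A \<subseteq> {0..2}" "B \<subseteq> {0..2}" using A B unfolding L'_def Lposet_def by auto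
        have "2 \<notin> A" "0 \<notin> A" "2 \<in> B" using True k1 unfolding code2_def by (auto split: if_splits)
        have "A \<subseteq> {0..1}"
        proof
          fix x assume "x \<in> A"
          then have "x \<le> 2" "x \<noteq> 2" using As \<open>2 \<notin> A\<close> by auto
          then show "x \<in> {0..1}" by simp
        qed
        moreover have "A \<noteq> {}" using A unfolding L'_def Lposet_def by auto
        ultimately have "Max A \<le> 1" by (rule Max_le_n)
        moreover have "2 \<le> Max B" by (rule Max_ge'[OF As(2) \<open>2 \<in> B\<close>])
        ultimately show ?thesis using q by simp
      qed
    qed
  qed
  obtain G' where G': "isfun C (Lposet 2 k) (\<subseteq>) G'" and M': "marks W (Lposet 2 k) (\<subseteq>) (\<lambda>A0 A1. Max A0 = Max A1) G'"
    and ag: "\<forall>A\<in>L'. \<forall>B\<in>L'. A \<subseteq> B \<longrightarrow> G' A B = G A B"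
  proof -
    have "isfun C L' (\<subseteq>) G \<and> marks W L' (\<subseteq>) (\<lambda>A0 A1. Max A0 = Max A1) G \<longrightarrow>
      (\<exists>G'. isfun C (Lposet 2 k) (\<subseteq>) G' \<and> marks W (Lposet 2 k) (\<subseteq>) (\<lambda>A0 A1. Max A0 = Max A1) G' \<and>
        (\<forall>A\<in>L'. \<forall>B\<in>L'. A \<subseteq> B \<longrightarrow> G' A B = G A B))"
      using F unfolding flift_def L'_def by (rule spec)
    then show ?thesis using GF GM that by blast
  qed
  define N where "N = {0..2::nat}"
  define S0 where "S0 = {k}"
  define S1 where "S1 = {0, k}"
  define S2 where "S2 = {k, j}"
  have inL: "S0 \<in> L'" "S1 \<in> L'" "S2 \<in> L'"
  proof -
    have z: "0 \<in> {0..2::nat}" "j \<in> {0..2::nat}" by (auto simp: jk)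
    show "S0 \<in> L'" unfolding L'_def Lposet_def S0_def using jk z by auto
    show "S1 \<in> L'" unfolding L'_def Lposet_def S1_def using jk z by auto
    show "S2 \<in> L'" unfolding L'_def Lposet_def S2_def using jk z by auto
  qed
  have inP: "S0 \<in> Lposet 2 k" "S1 \<in> Lposet 2 k" "S2 \<in> Lposet 2 k" "N \<in> Lposet 2 k"
    using inL jk unfolding L'_def Lposet_def N_def by auto
  have subs: "S0 \<subseteq> S1" "S0 \<subseteq> S2" "S1 \<subseteq> N" "S2 \<subseteq> N" "N \<subseteq> N" "S1 \<subseteq> S1" "S2 \<subseteq> S2"
    unfolding S0_def S1_def S2_def N_def using jk by auto
  have codes: "code2 j S0 = 0" "code2 j S1 = 1" "code2 j S2 = 2"
    unfolding code2_def S0_def S1_def S2_def using jk by auto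
  have g01: "G' S0 S1 = w" using ag inL subs codes unfolding G_def H_def by simp
  have g02: "G' S0 S2 = f" using ag inL subs codes unfolding G_def H_def by simp
  have g11: "G' S1 S1 = Id C (Cod C w)" using ag inL subs codes unfolding G_def H_def ob_def by simp
  have g22: "G' S2 S2 = Id C (Cod C f)" using ag inL subs codes unfolding G_def H_def ob_def by simp
  have MaxN: "Max N = 2" unfolding N_def by (rule Max_top) auto
  have MaxS2: "Max S2 = 2" by (rule Max_top[of _ 2]) (use jk in \<open>auto simp: S2_def\<close>)
  have w'W: "G' S2 N \<in> W" using M' inP subs MaxN MaxS2 unfolding marks_def by simp
  have f'W: "k = 2 \<Longrightarrow> G' S1 N \<in> W"
  proof -
    assume "k = 2"
    then have "Max S1 = 2" unfolding S1_def by simp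
    then show ?thesis using M' inP subs MaxN unfolding marks_def by simp
  qed
  have c1: "Comp C (G' S1 N) (G' S0 S1) = G' S0 N" by (rule isfun_comp[OF G' inP(1,2,4) subs(1,3)]) (use subs in auto)
  have c2: "Comp C (G' S2 N) (G' S0 S2) = G' S0 N" by (rule isfun_comp[OF G' inP(1,3,4) subs(2,4)]) (use subs in auto)
  have f'a: "G' S1 N \<in> Arr C" by (rule isfun_arr[OF G' inP(2,4) subs(3)])
  have d1: "Dom C (G' S1 N) = Cod C w" using isfun_dom[OF G' inP(2,4) subs(3)] g11 wa by (simp add: cod_obj)
  have d2: "Dom C (G' S2 N) = Cod C f" using isfun_dom[OF G' inP(3,4) subs(4)] g22 f by (simp add: cod_obj)
  have cc': "Cod C (G' S1 N) = Cod C (G' S2 N)"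
    using isfun_cod[OF G' inP(2,4) subs(3)] isfun_cod[OF G' inP(3,4) subs(4)] by simp
  show ?thesis
  proof (intro exI conjI impI)
    show "G' S1 N \<in> Arr C" "G' S2 N \<in> W" "Dom C (G' S1 N) = Cod C w" "Dom C (G' S2 N) = Cod C f"
      "Cod C (G' S1 N) = Cod C (G' S2 N)" by (fact f'a w'W d1 d2 cc')+
    show "Comp C (G' S1 N) w = Comp C (G' S2 N) f" using c1 c2 g01 g02 by simp
    show "k = 2 \<Longrightarrow> G' S1 N \<in> W" by (rule f'W)
  qed
qed


lemma conv_iii:
  assumes F: "flift C W (Lposet 3 1 - {{0..3}}) (\<subseteq>) (Lposet 3 1) (\<subseteq>) (\<lambda>A0 A1. Max A0 = Max A1)"
    and f: "f \<in> Arr C" and g: "g \<in> Arr C" and fg: "Dom C f = Dom C g" "Cod C f = Cod C g"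
    and w: "w \<in> W" "Cod C w = Dom C f" and eq: "Comp C f w = Comp C g w"
  shows "\<exists>v\<in>W. Dom C v = Cod C f \<and> Comp C v f = Comp C v g"
proof -
  have wa: "w \<in> Arr C" using w by simp
  define ob where "ob = (\<lambda>x::nat. if x = 0 then Dom C w else if x < 4 then Cod C w else Cod C f)"
  define H where "H = (\<lambda>x y::nat. if x = y then Id C (ob x) else if x = 0 then (if 4 \<le> y then Comp C f w else w)
     else if 4 \<le> x \<or> y < 4 then Id C (ob x) else if x = 1 then f else g)"
  have obO: "ob x \<in> Obj C" for x unfolding ob_def using wa f by (auto intro: dom_obj cod_obj)
  define P0 where "P0 = {0::nat,1,2,3,4,5,6}"
  have lec: "x = y \<or> (x = 0 \<and> 1 \<le> y \<and> y < 4) \<or> (x = 0 \<and> 4 \<le> y) \<or> (4 \<le> x \<and> 4 \<le> y) \<or>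
       (1 \<le> x \<and> x < 4 \<and> 1 \<le> y \<and> y < 4) \<or> (x = 1 \<and> y = 5) \<or> (x = 2 \<and> y = 6)"
    if "x \<in> P0" "y \<in> P0" "le0 x y" for x y
    using that unfolding P0_def le0_def by (elim insertE emptyE; simp)
  have lec3: "x = y \<or> y = z \<or> (x = 0 \<and> y = 1 \<and> z = 3) \<or> (x = 0 \<and> y = 1 \<and> z = 5) \<or>
      (x = 0 \<and> y = 2 \<and> z = 3) \<or> (x = 0 \<and> y = 2 \<and> z = 6) \<or> (x = 0 \<and> y = 4 \<and> z = 5) \<or> (x = 0 \<and> y = 4 \<and> z = 6)"
    if "x \<in> P0" "y \<in> P0" "z \<in> P0" "le0 x y" "le0 y z" for x y z
    using that unfolding P0_def le0_def by (elim insertE emptyE; simp)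
  have fw: "Comp C f w \<in> Arr C" "Dom C (Comp C f w) = Dom C w" "Cod C (Comp C f w) = Cod C f"
    using f wa w by auto
  have Ha: "H x y \<in> Arr C \<and> Dom C (H x y) = ob x \<and> Cod C (H x y) = ob y"
    if xy: "x \<in> P0" "y \<in> P0" "le0 x y" for x y
  proof -
    from lec[OF xy] show ?thesis
    proof (elim disjE conjE)
      assume "x = y" then show ?thesis using obO[of x] unfolding H_def by simp
    next
      assume "x = 0" "1 \<le> y" "y < 4" then show ?thesis using wa unfolding H_def ob_def by simp
    next
      assume "x = 0" "4 \<le> y" then show ?thesis using fw unfolding H_def ob_def by simp
    next
      assume "4 \<le> x" "4 \<le> y" then show ?thesis using obO[of x] unfolding H_def ob_def by simp
    next
      assume "1 \<le> x" "x < 4" "1 \<le> y" "y < 4" then show ?thesis using obO[of x] unfolding H_def ob_def by simp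
    next
      assume "x = 1" "y = 5" then show ?thesis using f w unfolding H_def ob_def by simp
    next
      assume "x = 2" "y = 6" then show ?thesis using g w fg unfolding H_def ob_def by simp
    qed
  qed
  have HI: "H x x = Id C (ob x)" for x unfolding H_def by simp
  have HF: "isfun C P0 le0 H" unfolding isfun_def
  proof (intro conjI ballI impI)
    fix x assume "x \<in> P0"
    show "H x x \<in> Arr C" "H x x = Id C (Dom C (H x x))" unfolding HI using obO[of x] by auto
  next
    fix x y assume "x \<in> P0" "y \<in> P0" "le0 x y"
    then show "H x y \<in> Arr C" "Dom C (H x y) = Dom C (H x x)" "Cod C (H x y) = Dom C (H y y)"
      using Ha unfolding HI using obO by auto
  next
    fix x y z assume xyz: "x \<in> P0" "y \<in> P0" "z \<in> P0" "le0 x y" "le0 y z" "le0 x z"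
    from lec3[OF xyz(1-5)] show "Comp C (H y z) (H x y) = H x z"
    proof (elim disjE conjE)
      assume "x = y"
      then show ?thesis using Ha[OF xyz(1,3,6)] comp_id_r[of "H x z" "ob x"] by (simp add: HI)
    next
      assume "y = z"
      then show ?thesis using Ha[OF xyz(1,3,6)] comp_id_l[of "H x z" "ob z"] by (simp add: HI)
    next
      assume "x = 0" "y = 1" "z = 3" then show ?thesis using wa comp_id_l[of w] unfolding H_def ob_def by simp
    next
      assume "x = 0" "y = 1" "z = 5" then show ?thesis unfolding H_def by simp
    next
      assume "x = 0" "y = 2" "z = 3" then show ?thesis using wa comp_id_l[of w] unfolding H_def ob_def by simp
    next
      assume "x = 0" "y = 2" "z = 6" then show ?thesis using eq unfolding H_def by simp
    next
      assume "x = 0" "y = 4" "z = 5" then show ?thesis using fw comp_id_l[of "Comp C f w"] unfolding H_def ob_def by simp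
    next
      assume "x = 0" "y = 4" "z = 6" then show ?thesis using fw comp_id_l[of "Comp C f w"] unfolding H_def ob_def by simp
    qed
  qed
  define L' where "L' = Lposet 3 1 - {{0..3}}"
  define G where "G = (\<lambda>A B. H (code3 A) (code3 B))"
  have P06: "{0..6::nat} = P0" unfolding P0_def by auto
  have cP: "\<forall>A\<in>L'. code3 A \<in> P0" using code3_range unfolding L'_def P06 by blast
  have GF: "isfun C L' (\<subseteq>) G" unfolding G_def
    by (rule isfun_pull[OF HF cP]) (auto intro: code3_mono)
  have GM: "marks W L' (\<subseteq>) (\<lambda>A0 A1. Max A0 = Max A1) G" unfolding marks_def
  proof (intro ballI impI)
    fix A B assume A: "A \<in> L'" and B: "B \<in> L'" and AB: "A \<subseteq> B" and q: "Max A = Max B"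
    have cA: "code3 A \<in> P0" and cB: "code3 B \<in> P0" using cP A B by auto
    have l: "le0 (code3 A) (code3 B)" by (rule code3_mono[OF AB])
    show "G A B \<in> W"
    proof (cases "code3 A < 4 \<and> 4 \<le> code3 B")
      case False
      from lec[OF cA cB l] False show ?thesis
        using w obO unfolding G_def H_def by (elim disjE) auto
    next
      case True
      have As: "A \<subseteq> {0..3}" "B \<subseteq> {0..3}" using A B unfolding L'_def Lposet_def by auto
      have "3 \<notin> A" "3 \<in> B" using True unfolding code3_def by (auto split: if_splits)
      have "A \<subseteq> {0..2}"
      proof
        fix x assume "x \<in> A"
        then have "x \<le> 3" "x \<noteq> 3" using As \<open>3 \<notin> A\<close> by auto
        then show "x \<in> {0..2}" by simp
      qed
      moreover have "A \<noteq> {}" using A unfolding L'_def Lposet_def by auto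
      ultimately have "Max A \<le> 2" by (rule Max_le_n)
      moreover have "3 \<le> Max B" by (rule Max_ge'[OF As(2) \<open>3 \<in> B\<close>])
      ultimately show ?thesis using q by simp
    qed
  qed
  obtain G' where G': "isfun C (Lposet 3 1) (\<subseteq>) G'" and M': "marks W (Lposet 3 1) (\<subseteq>) (\<lambda>A0 A1. Max A0 = Max A1) G'"
    and ag: "\<forall>A\<in>L'. \<forall>B\<in>L'. A \<subseteq> B \<longrightarrow> G' A B = G A B"
  proof -
    have "isfun C L' (\<subseteq>) G \<and> marks W L' (\<subseteq>) (\<lambda>A0 A1. Max A0 = Max A1) G \<longrightarrow>
      (\<exists>G'. isfun C (Lposet 3 1) (\<subseteq>) G' \<and> marks W (Lposet 3 1) (\<subseteq>) (\<lambda>A0 A1. Max A0 = Max A1) G' \<and>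
        (\<forall>A\<in>L'. \<forall>B\<in>L'. A \<subseteq> B \<longrightarrow> G' A B = G A B))"
      using F unfolding flift_def L'_def by (rule spec)
    then show ?thesis using GF GM that by blast
  qed
  define N where "N = {0..3::nat}"
  have N2: "2 \<in> N" "0 \<in> N" "3 \<in> N" unfolding N_def by auto
  have neq: "x \<in> N \<Longrightarrow> x \<notin> S \<Longrightarrow> S \<noteq> N" for x S by blast
  define s13 where "s13 = {1,3::nat}"
  define s013 where "s013 = {0,1,3::nat}"
  define s123 where "s123 = {1,2,3::nat}"
  define s01 where "s01 = {0,1::nat}"
  define s12 where "s12 = {1,2::nat}"
  define s012 where "s012 = {0,1,2::nat}"
  have inLp: "s13 \<in> Lposet 3 1" "s013 \<in> Lposet 3 1" "s123 \<in> Lposet 3 1" "s01 \<in> Lposet 3 1"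
    "s12 \<in> Lposet 3 1" "s012 \<in> Lposet 3 1" "N \<in> Lposet 3 1"
    unfolding Lposet_def s13_def s013_def s123_def s01_def s12_def s012_def N_def by auto
  have neN: "s13 \<noteq> N" "s013 \<noteq> N" "s123 \<noteq> N" "s01 \<noteq> N" "s12 \<noteq> N" "s012 \<noteq> N"
  proof -
    show "s13 \<noteq> N" by (rule neq[OF N2(2)]) (simp add: s13_def)
    show "s013 \<noteq> N" by (rule neq[OF N2(1)]) (simp add: s013_def)
    show "s123 \<noteq> N" by (rule neq[OF N2(2)]) (simp add: s123_def)
    show "s01 \<noteq> N" by (rule neq[OF N2(1)]) (simp add: s01_def)
    show "s12 \<noteq> N" by (rule neq[OF N2(2)]) (simp add: s12_def)
    show "s012 \<noteq> N" by (rule neq[OF N2(3)]) (simp add: s012_def)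
  qed
  have inL: "s13 \<in> L'" "s013 \<in> L'" "s123 \<in> L'" "s01 \<in> L'" "s12 \<in> L'" "s012 \<in> L'"
    using inLp neN unfolding L'_def N_def by blast+
  have codes: "code3 s13 = 4" "code3 s013 = 5" "code3 s123 = 6" "code3 s01 = 1" "code3 s12 = 2" "code3 s012 = 3"
    unfolding code3_def s13_def s013_def s123_def s01_def s12_def s012_def by auto
  have subs: "s13 \<subseteq> s013" "s13 \<subseteq> s123" "s01 \<subseteq> s013" "s12 \<subseteq> s123" "s01 \<subseteq> s012" "s12 \<subseteq> s012"
    unfolding s13_def s013_def s123_def s01_def s12_def s012_def by auto
  have subN: "s13 \<subseteq> N" "s013 \<subseteq> N" "s123 \<subseteq> N" "s01 \<subseteq> N" "s12 \<subseteq> N" "s012 \<subseteq> N" "N \<subseteq> N"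
    using inLp unfolding Lposet_def N_def by auto
  have Gv: "G' s13 s013 = Id C (Cod C f)" "G' s13 s123 = Id C (Cod C f)" "G' s01 s013 = f" "G' s12 s123 = g"
    "G' s01 s012 = Id C (Cod C w)" "G' s12 s012 = Id C (Cod C w)"
    "G' s013 s013 = Id C (Cod C f)" "G' s123 s123 = Id C (Cod C f)" "G' s012 s012 = Id C (Cod C w)"
    "G' s13 s13 = Id C (Cod C f)"
    using ag inL subs codes unfolding G_def H_def ob_def by auto
  have codO: "Cod C f \<in> Obj C" "Cod C w \<in> Obj C" using f wa by (auto intro: cod_obj)
  have dom_top: "Dom C (G' S N) = Dom C (G' S S)" if "S \<in> Lposet 3 1" "S \<subseteq> N" for S
    by (rule isfun_dom[OF G' that(1) inLp(7) that(2)])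
  have arr_top: "G' S N \<in> Arr C" if "S \<in> Lposet 3 1" "S \<subseteq> N" for S
    by (rule isfun_arr[OF G' that(1) inLp(7) that(2)])
  have cmp: "Comp C (G' B N) (G' A B) = G' A N" if "A \<in> Lposet 3 1" "B \<in> Lposet 3 1" "A \<subseteq> B" "B \<subseteq> N" for A B
    by (rule isfun_comp[OF G' that(1,2) inLp(7) that(3,4)]) (use that in auto)
  have e1: "G' s13 N = G' s013 N"
    using cmp[OF inLp(1,2) subs(1) subN(2)] Gv(1) comp_id_r[OF arr_top[OF inLp(2) subN(2)]] dom_top[OF inLp(2) subN(2)] Gv(7) codO
    by simp
  have e2: "G' s13 N = G' s123 N"
    using cmp[OF inLp(1,3) subs(2) subN(3)] Gv(2) comp_id_r[OF arr_top[OF inLp(3) subN(3)]] dom_top[OF inLp(3) subN(3)] Gv(8) codO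
    by simp
  have e5: "G' s01 N = G' s012 N"
    using cmp[OF inLp(4,6) subs(5) subN(6)] Gv(5) comp_id_r[OF arr_top[OF inLp(6) subN(6)]] dom_top[OF inLp(6) subN(6)] Gv(9) codO
    by simp
  have e6: "G' s12 N = G' s012 N"
    using cmp[OF inLp(5,6) subs(6) subN(6)] Gv(6) comp_id_r[OF arr_top[OF inLp(6) subN(6)]] dom_top[OF inLp(6) subN(6)] Gv(9) codO
    by simp
  have e3: "Comp C (G' s13 N) f = G' s01 N" using cmp[OF inLp(4,2) subs(3) subN(2)] Gv(3) e1 by simp
  have e4: "Comp C (G' s13 N) g = G' s12 N" using cmp[OF inLp(5,3) subs(4) subN(3)] Gv(4) e2 by simp
  have MaxN: "Max N = 3" unfolding N_def by (rule Max_top) auto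
  have Max13: "Max s13 = 3" unfolding s13_def by simp
  have vW: "G' s13 N \<in> W" using M' inLp(1,7) subN(1) MaxN Max13 unfolding marks_def by simp
  have dv: "Dom C (G' s13 N) = Cod C f" using dom_top[OF inLp(1) subN(1)] Gv(10) codO by simp
  show ?thesis using vW dv e3 e4 e5 e6 by auto
qed

end



lemma part1:
  assumes C: "category C" and WA: "W \<subseteq> Arr C" and WI: "\<forall>x\<in>Obj C. Id C x \<in> W"
  shows "proper_left_fractions C W \<longleftrightarrow> CLF (cnerve C) (nmark C W)"
proof -
  interpret mcat C W using C WA WI by (unfold_locales) auto
  have clf: "CLF (cnerve C) (nmark C W) \<longleftrightarrow> compclosed \<and>
     (\<forall>n k. 2 \<le> n \<longrightarrow> 0 < k \<longrightarrow> k \<le> n \<longrightarrow>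
        flift C W (Lposet n k - {{0..n}}) (\<subseteq>) (Lposet n k) (\<subseteq>) (\<lambda>A0 A1. Max A0 = Max A1))"
    unfolding CLF_flift weak_iff ..
  show ?thesis
  proof
    assume P: "proper_left_fractions C W"
    interpret plf C W using P by unfold_locales
    have "compclosed" unfolding compclosed_def using cc by blast
    moreover have "\<forall>n k. 2 \<le> n \<longrightarrow> 0 < k \<longrightarrow> k \<le> n \<longrightarrow>
        flift C W (Lposet n k - {{0..n}}) (\<subseteq>) (Lposet n k) (\<subseteq>) (\<lambda>A0 A1. Max A0 = Max A1)"
      using main_L by blast
    ultimately show "CLF (cnerve C) (nmark C W)" using clf by blast
  next
    assume "CLF (cnerve C) (nmark C W)"
    then have ccl: compclosed and F: "\<And>n k. 2 \<le> n \<Longrightarrow> 0 < k \<Longrightarrow> k \<le> n \<Longrightarrow>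
        flift C W (Lposet n k - {{0..n}}) (\<subseteq>) (Lposet n k) (\<subseteq>) (\<lambda>A0 A1. Max A0 = Max A1)"
      using clf by blast+
    have F21: "flift C W (Lposet 2 1 - {{0..2}}) (\<subseteq>) (Lposet 2 1) (\<subseteq>) (\<lambda>A0 A1. Max A0 = Max A1)" by (rule F) auto
    have F22: "flift C W (Lposet 2 2 - {{0..2}}) (\<subseteq>) (Lposet 2 2) (\<subseteq>) (\<lambda>A0 A1. Max A0 = Max A1)" by (rule F) auto
    have F31: "flift C W (Lposet 3 1 - {{0..3}}) (\<subseteq>) (Lposet 3 1) (\<subseteq>) (\<lambda>A0 A1. Max A0 = Max A1)" by (rule F) auto
    show "proper_left_fractions C W" unfolding proper_left_fractions_def
    proof (intro conjI)
      show "\<forall>x\<in>Obj C. Id C x \<in> W" by (rule WI)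
      show "\<forall>u\<in>W. \<forall>v\<in>W. Cod C u = Dom C v \<longrightarrow> Comp C v u \<in> W" using ccl unfolding compclosed_def .
      show "\<forall>f\<in>Arr C. \<forall>w\<in>W. Dom C f = Dom C w \<longrightarrow>
        (\<exists>f' w'. f' \<in> Arr C \<and> w' \<in> W \<and> Dom C f' = Cod C w \<and> Dom C w' = Cod C f \<and>
                 Cod C f' = Cod C w' \<and> Comp C f' w = Comp C w' f \<and> (f \<in> W \<longrightarrow> f' \<in> W))"
      proof (intro ballI impI)
        fix f w assume f: "f \<in> Arr C" and w: "w \<in> W" and d: "Dom C f = Dom C w"
        show "\<exists>f' w'. f' \<in> Arr C \<and> w' \<in> W \<and> Dom C f' = Cod C w \<and> Dom C w' = Cod C f \<and>
                 Cod C f' = Cod C w' \<and> Comp C f' w = Comp C w' f \<and> (f \<in> W \<longrightarrow> f' \<in> W)"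
        proof (cases "f \<in> W")
          case True
          from conv_ii_k[of 2, OF _ F22 f w d] True show ?thesis by auto
        next
          case False
          from conv_ii_k[of 1, OF _ F21 f w d] False show ?thesis by auto
        qed
      qed
      show "\<forall>f\<in>Arr C. \<forall>g\<in>Arr C. Dom C f = Dom C g \<longrightarrow> Cod C f = Cod C g \<longrightarrow>
        (\<exists>w\<in>W. Cod C w = Dom C f \<and> Comp C f w = Comp C g w) \<longrightarrow>
        (\<exists>v\<in>W. Dom C v = Cod C f \<and> Comp C v f = Comp C v g)"
      proof (intro ballI impI)
        fix f g assume f: "f \<in> Arr C" and g: "g \<in> Arr C" and fg: "Dom C f = Dom C g" "Cod C f = Cod C g"
          and "\<exists>w\<in>W. Cod C w = Dom C f \<and> Comp C f w = Comp C g w"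
        then obtain w where w: "w \<in> W" "Cod C w = Dom C f" and eq: "Comp C f w = Comp C g w" by blast
        show "\<exists>v\<in>W. Dom C v = Cod C f \<and> Comp C v f = Comp C v g"
          by (rule conv_iii[OF F31 f g fg w eq])
      qed
    qed
  qed
qed




lemma op_simps[simp]: "Obj (op_cat C) = Obj C" "Arr (op_cat C) = Arr C" "Dom (op_cat C) = Cod C"
  "Cod (op_cat C) = Dom C" "Id (op_cat C) = Id C" "Comp (op_cat C) g f = Comp C f g"
  by (simp_all add: op_cat_def)

lemma op_op: "op_cat (op_cat C) = C"
  by (cases C) (simp add: op_cat_def)

lemma op_category: "category C \<Longrightarrow> category (op_cat C)"
  unfolding category_def by (simp add: op_cat_def)

lemma isfun_to_op:
  assumes C: "category C" and G: "isfun C P le G"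
  shows "isfun (op_cat C) P (\<lambda>A B. le B A) (\<lambda>A B. G B A)"
proof -
  interpret cat C by (unfold_locales) (rule C)
  have dc: "Cod C (G A A) = Dom C (G A A)" if "A \<in> P" for A
  proof -
    have a: "G A A \<in> Arr C" by (rule isfun_idarr[OF G that])
    have "Cod C (Id C (Dom C (G A A))) = Dom C (G A A)" using dom_obj[OF a] by simp
    then show ?thesis using isfun_id[OF G that] by metis
  qed
  show ?thesis unfolding isfun_def op_simps
  proof (intro conjI ballI impI)
    fix A assume A: "A \<in> P"
    show "G A A \<in> Arr C" by (rule isfun_idarr[OF G A])
    show "G A A = Id C (Cod C (G A A))" using isfun_id[OF G A] dc[OF A] by metis
  next
    fix A B assume A: "A \<in> P" and B: "B \<in> P" and l: "le B A"
    show "G B A \<in> Arr C" by (rule isfun_arr[OF G B A l])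
    show "Cod C (G B A) = Cod C (G A A)" using isfun_cod[OF G B A l] dc[OF A] by simp
    show "Dom C (G B A) = Cod C (G B B)" using isfun_dom[OF G B A l] dc[OF B] by simp
  next
    fix A B D assume A: "A \<in> P" and B: "B \<in> P" and D: "D \<in> P" and l: "le B A" "le D B" "le D A"
    show "Comp C (G B A) (G D B) = G D A" by (rule isfun_comp[OF G D B A l(2) l(1) l(3)])
  qed
qed

lemma flift_to_op:
  assumes C: "category C" and F: "flift C W P' le' P le Q"
  shows "flift (op_cat C) W P' (\<lambda>A B. le' B A) P (\<lambda>A B. le B A) (\<lambda>A B. Q B A)"
  unfolding flift_def
proof (intro allI impI, elim conjE)
  fix G2 assume G2: "isfun (op_cat C) P' (\<lambda>A B. le' B A) G2" and M2: "marks W P' (\<lambda>A B. le' B A) (\<lambda>A B. Q B A) G2"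
  have G: "isfun C P' le' (\<lambda>A B. G2 B A)"
    using isfun_to_op[OF op_category[OF C] G2] unfolding op_op by simp
  have M: "marks W P' le' Q (\<lambda>A B. G2 B A)" using M2 unfolding marks_def by blast
  obtain G' where G': "isfun C P le G'" and M': "marks W P le Q G'"
    and ag: "\<forall>A\<in>P'. \<forall>B\<in>P'. le' A B \<longrightarrow> G' A B = G2 B A"
    using F G M unfolding flift_def by blast
  show "\<exists>G''. isfun (op_cat C) P (\<lambda>A B. le B A) G'' \<and> marks W P (\<lambda>A B. le B A) (\<lambda>A B. Q B A) G'' \<and>
      (\<forall>A\<in>P'. \<forall>B\<in>P'. le' B A \<longrightarrow> G'' A B = G2 A B)"
  proof (intro exI conjI)
    show "isfun (op_cat C) P (\<lambda>A B. le B A) (\<lambda>A B. G' B A)" by (rule isfun_to_op[OF C G'])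
    show "marks W P (\<lambda>A B. le B A) (\<lambda>A B. Q B A) (\<lambda>A B. G' B A)" using M' unfolding marks_def by blast
    show "\<forall>A\<in>P'. \<forall>B\<in>P'. le' B A \<longrightarrow> G' B A = G2 A B" using ag by blast
  qed
qed

lemma flift_op_iff:
  assumes C: "category C"
  shows "flift C W P' le' P le Q \<longleftrightarrow> flift (op_cat C) W P' (\<lambda>A B. le' B A) P (\<lambda>A B. le B A) (\<lambda>A B. Q B A)"
proof
  assume "flift C W P' le' P le Q"
  then show "flift (op_cat C) W P' (\<lambda>A B. le' B A) P (\<lambda>A B. le B A) (\<lambda>A B. Q B A)" by (rule flift_to_op[OF C])
next
  assume "flift (op_cat C) W P' (\<lambda>A B. le' B A) P (\<lambda>A B. le B A) (\<lambda>A B. Q B A)"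
  from flift_to_op[OF op_category[OF C] this] show "flift C W P' le' P le Q" unfolding op_op by simp
qed

lemma marks_pull:
  assumes M: "marks W P0 lez Q0 H" and cP: "\<forall>A\<in>P. c A \<in> P0"
    and mo: "\<forall>A\<in>P. \<forall>B\<in>P. le A B \<longrightarrow> lez (c A) (c B)"
    and q: "\<forall>A\<in>P. \<forall>B\<in>P. Q A B \<longrightarrow> Q0 (c A) (c B)"
  shows "marks W P le Q (\<lambda>A B. H (c A) (c B))"
  using M cP mo q unfolding marks_def by blast

lemma flift_iso:
  assumes F: "flift C W P' le' P le Q"
    and phi: "\<forall>A\<in>P. phi A \<in> P2" and psi: "\<forall>B\<in>P2. psi B \<in> P"
    and pp: "\<forall>A\<in>P. psi (phi A) = A" and qq: "\<forall>B\<in>P2. phi (psi B) = B"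
    and sub: "P' \<subseteq> P" and sub2: "P2' \<subseteq> P2" and P'iff: "\<forall>A\<in>P. A \<in> P' \<longleftrightarrow> phi A \<in> P2'"
    and le: "\<forall>A\<in>P. \<forall>B\<in>P. le A B \<longleftrightarrow> le2 (phi A) (phi B)"
    and le': "\<forall>A\<in>P'. \<forall>B\<in>P'. le' A B \<longleftrightarrow> le2' (phi A) (phi B)"
    and Q: "\<forall>A\<in>P. \<forall>B\<in>P. Q A B \<longleftrightarrow> Q2 (phi A) (phi B)"
  shows "flift C W P2' le2' P2 le2 Q2"
  unfolding flift_def
proof (intro allI impI, elim conjE)
  fix G2 assume G2: "isfun C P2' le2' G2" and M2: "marks W P2' le2' Q2 G2"
  have phi': "\<forall>A\<in>P'. phi A \<in> P2'" using P'iff sub by blast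
  have G: "isfun C P' le' (\<lambda>A B. G2 (phi A) (phi B))"
    by (rule isfun_pull[OF G2 phi']) (use le' in blast)
  have M: "marks W P' le' Q (\<lambda>A B. G2 (phi A) (phi B))"
    by (rule marks_pull[OF M2 phi']) (use le' Q sub in blast)+
  obtain G' where G': "isfun C P le G'" and M': "marks W P le Q G'"
    and ag: "\<forall>A\<in>P'. \<forall>B\<in>P'. le' A B \<longrightarrow> G' A B = G2 (phi A) (phi B)"
    using F G M unfolding flift_def by blast
  have lepsi: "\<forall>X\<in>P2. \<forall>Y\<in>P2. le2 X Y \<longrightarrow> le (psi X) (psi Y)"
  proof (intro ballI impI)
    fix X Y assume X: "X \<in> P2" and Y: "Y \<in> P2" and l: "le2 X Y"
    have "le2 (phi (psi X)) (phi (psi Y))" using l qq X Y by simp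
    then show "le (psi X) (psi Y)" using le psi X Y by blast
  qed
  have Qpsi: "\<forall>X\<in>P2. \<forall>Y\<in>P2. Q2 X Y \<longrightarrow> Q (psi X) (psi Y)"
  proof (intro ballI impI)
    fix X Y assume X: "X \<in> P2" and Y: "Y \<in> P2" and l: "Q2 X Y"
    have "Q2 (phi (psi X)) (phi (psi Y))" using l qq X Y by simp
    then show "Q (psi X) (psi Y)" using Q psi X Y by blast
  qed
  show "\<exists>G''. isfun C P2 le2 G'' \<and> marks W P2 le2 Q2 G'' \<and> (\<forall>A\<in>P2'. \<forall>B\<in>P2'. le2' A B \<longrightarrow> G'' A B = G2 A B)"
  proof (intro exI conjI)
    show "isfun C P2 le2 (\<lambda>X Y. G' (psi X) (psi Y))" by (rule isfun_pull[OF G' psi lepsi])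
    show "marks W P2 le2 Q2 (\<lambda>X Y. G' (psi X) (psi Y))" by (rule marks_pull[OF M' psi lepsi Qpsi])
    show "\<forall>X\<in>P2'. \<forall>Y\<in>P2'. le2' X Y \<longrightarrow> G' (psi X) (psi Y) = G2 X Y"
    proof (intro ballI impI)
      fix X Y assume X: "X \<in> P2'" and Y: "Y \<in> P2'" and l: "le2' X Y"
      have X2: "X \<in> P2" and Y2: "Y \<in> P2" using X Y sub2 by auto
      have pX: "psi X \<in> P'" using P'iff psi X2 qq X by metis
      have pY: "psi Y \<in> P'" using P'iff psi Y2 qq Y by metis
      have "le' (psi X) (psi Y)" using le' pX pY l qq X2 Y2 by simp
      then have "G' (psi X) (psi Y) = G2 (phi (psi X)) (phi (psi Y))" using ag pX pY by blast
      then show "G' (psi X) (psi Y) = G2 X Y" using qq X2 Y2 by simp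
    qed
  qed
qed




definition rv :: "nat \<Rightarrow> nat set \<Rightarrow> nat set" where "rv n A = (\<lambda>a. n - a) ` A"

lemma rv_sub: "rv n A \<subseteq> {0..n}" unfolding rv_def by auto

lemma rv_rv: "A \<subseteq> {0..n} \<Longrightarrow> rv n (rv n A) = A"
proof -
  assume A: "A \<subseteq> {0..n}"
  have "rv n (rv n A) = (\<lambda>a. n - (n - a)) ` A" unfolding rv_def image_image ..
  also have "\<dots> = id ` A" by (rule image_cong) (use A in auto)
  finally show ?thesis by simp
qed

lemma rv_mem: "A \<subseteq> {0..n} \<Longrightarrow> k \<le> n \<Longrightarrow> (n - k \<in> rv n A \<longleftrightarrow> k \<in> A)"
proof
  assume A: "A \<subseteq> {0..n}" and k: "k \<le> n" and "n - k \<in> rv n A"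
  then obtain a where a: "a \<in> A" "n - k = n - a" unfolding rv_def by auto
  then have "a \<le> n" using A by auto
  then have "a = k" using a k by simp
  then show "k \<in> A" using a by simp
next
  assume "k \<in> A" then show "n - k \<in> rv n A" unfolding rv_def by auto
qed

lemma rv_full: "rv n {0..n} = {0..n}"
proof -
  have "{0..n} \<subseteq> rv n {0..n}"
  proof
    fix x assume "x \<in> {0..n}"
    then have "x = n - (n - x)" "n - x \<in> {0..n}" by auto
    then show "x \<in> rv n {0..n}" unfolding rv_def by blast
  qed
  then show ?thesis using rv_sub by blast
qed

lemma rv_subset: "A \<subseteq> {0..n} \<Longrightarrow> B \<subseteq> {0..n} \<Longrightarrow> (A \<subseteq> B \<longleftrightarrow> rv n A \<subseteq> rv n B)"
proof
  assume "A \<subseteq> B" then show "rv n A \<subseteq> rv n B" unfolding rv_def by (rule image_mono)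
next
  assume A: "A \<subseteq> {0..n}" and B: "B \<subseteq> {0..n}" and s: "rv n A \<subseteq> rv n B"
  have "(\<lambda>a. n - a) ` rv n A \<subseteq> (\<lambda>a. n - a) ` rv n B" by (rule image_mono[OF s])
  then have "rv n (rv n A) \<subseteq> rv n (rv n B)" unfolding rv_def .
  then show "A \<subseteq> B" using rv_rv[OF A] rv_rv[OF B] by simp
qed

lemma rv_Max: "A \<subseteq> {0..n} \<Longrightarrow> A \<noteq> {} \<Longrightarrow> Max (rv n A) = n - Min A"
proof -
  assume A: "A \<subseteq> {0..n}" and ne: "A \<noteq> {}"
  have fin: "finite A" by (rule fin_sub[OF A])
  show ?thesis
  proof (rule Max_eqI)
    show "finite (rv n A)" unfolding rv_def using fin by simp
    show "n - Min A \<in> rv n A" unfolding rv_def using Min_in[OF fin ne] by simp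
    fix y assume "y \<in> rv n A"
    then obtain a where "a \<in> A" "y = n - a" unfolding rv_def by auto
    then show "y \<le> n - Min A" using Min_le[OF fin] by (simp add: diff_le_mono2)
  qed
qed

lemma rv_Min: "A \<subseteq> {0..n} \<Longrightarrow> A \<noteq> {} \<Longrightarrow> Min (rv n A) = n - Max A"
proof -
  assume A: "A \<subseteq> {0..n}" and ne: "A \<noteq> {}"
  have r: "rv n A \<subseteq> {0..n}" "rv n A \<noteq> {}" using rv_sub ne unfolding rv_def by auto
  have "Max (rv n (rv n A)) = n - Min (rv n A)" by (rule rv_Max[OF r])
  then have "Max A = n - Min (rv n A)" using rv_rv[OF A] by simp
  moreover have "Min (rv n A) \<le> n" using Min_in[OF fin_sub[OF r(1)] r(2)] r(1) by auto
  ultimately show ?thesis by simp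
qed

lemma Lposet_ne: "A \<in> Lposet n k \<Longrightarrow> A \<subseteq> {0..n} \<and> A \<noteq> {}"
  unfolding Lposet_def by auto

lemma rv_Lposet: "k \<le> n \<Longrightarrow> A \<in> Lposet n k \<Longrightarrow> rv n A \<in> Lposet n (n - k)"
  unfolding Lp using rv_sub rv_mem by blast

lemma rv_full_iff: "A \<subseteq> {0..n} \<Longrightarrow> A = {0..n} \<longleftrightarrow> rv n A = {0..n}"
proof
  assume "A = {0..n}" then show "rv n A = {0..n}" using rv_full by simp
next
  assume a: "A \<subseteq> {0..n}" and "rv n A = {0..n}"
  then have "rv n (rv n A) = {0..n}" using rv_full by simp
  then show "A = {0..n}" using rv_rv[OF a] by simp
qed

lemma rv_Lposet2: "k \<le> n \<Longrightarrow> A \<in> Lposet n (n - k) \<Longrightarrow> rv n A \<in> Lposet n k"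
proof -
  assume kn: "k \<le> n" and A: "A \<in> Lposet n (n - k)"
  have "rv n A \<in> Lposet n (n - (n - k))" by (rule rv_Lposet[OF _ A]) simp
  moreover have "n - (n - k) = k" using kn by simp
  ultimately show ?thesis by simp
qed

lemma rv_subset_L: "\<forall>A\<in>P. \<forall>B\<in>P. (A \<subseteq> B) = (rv n A \<subseteq> rv n B)" if "P \<subseteq> Lposet n k" for P n k
proof (intro ballI)
  fix A B assume "A \<in> P" "B \<in> P"
  then have "A \<in> Lposet n k" "B \<in> Lposet n k" using that by auto
  then have "A \<subseteq> {0..n}" "B \<subseteq> {0..n}" using Lposet_ne by auto
  then show "(A \<subseteq> B) = (rv n A \<subseteq> rv n B)" by (rule rv_subset)
qed

lemma rv_rv_L: "\<forall>A\<in>Lposet n k. rv n (rv n A) = A"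
proof
  fix A assume "A \<in> Lposet n k"
  then have "A \<subseteq> {0..n}" using Lposet_ne by auto
  then show "rv n (rv n A) = A" by (rule rv_rv)
qed

lemma R_to_L:
  assumes kn: "k \<le> n"
    and F: "flift C W (Lposet n k - {{0..n}}) (\<subseteq>) (Lposet n k) (\<subseteq>) (\<lambda>A B. Min B = Min A)"
  shows "flift C W (Lposet n (n-k) - {{0..n}}) (\<subseteq>) (Lposet n (n-k)) (\<subseteq>) (\<lambda>A B. Max A = Max B)"
proof (rule flift_iso[OF F, where phi = "rv n" and psi = "rv n"])
  show "\<forall>A\<in>Lposet n k. rv n A \<in> Lposet n (n - k)" using rv_Lposet[OF kn] by blast
  show "\<forall>B\<in>Lposet n (n - k). rv n B \<in> Lposet n k" using rv_Lposet2[OF kn] by blast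
  show "\<forall>A\<in>Lposet n k. rv n (rv n A) = A" by (rule rv_rv_L)
  show "\<forall>B\<in>Lposet n (n - k). rv n (rv n B) = B" by (rule rv_rv_L)
  show "Lposet n k - {{0..n}} \<subseteq> Lposet n k" by blast
  show "Lposet n (n - k) - {{0..n}} \<subseteq> Lposet n (n - k)" by blast
  show "\<forall>A\<in>Lposet n k. (A \<in> Lposet n k - {{0..n}}) = (rv n A \<in> Lposet n (n - k) - {{0..n}})"
  proof
    fix A assume A: "A \<in> Lposet n k"
    have "A = {0..n} \<longleftrightarrow> rv n A = {0..n}" by (rule rv_full_iff) (use Lposet_ne[OF A] in blast)
    then show "(A \<in> Lposet n k - {{0..n}}) = (rv n A \<in> Lposet n (n - k) - {{0..n}})"
    proof -
      have "rv n A \<in> Lposet n (n - k)" by (rule rv_Lposet[OF kn A])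
      then show ?thesis using A \<open>A = {0..n} \<longleftrightarrow> rv n A = {0..n}\<close> by blast
    qed
  qed
  show "\<forall>A\<in>Lposet n k. \<forall>B\<in>Lposet n k. (A \<subseteq> B) = (rv n A \<subseteq> rv n B)"
    by (rule rv_subset_L) blast
  show "\<forall>A\<in>Lposet n k - {{0..n}}. \<forall>B\<in>Lposet n k - {{0..n}}. (A \<subseteq> B) = (rv n A \<subseteq> rv n B)"
    by (rule rv_subset_L) blast
  show "\<forall>A\<in>Lposet n k. \<forall>B\<in>Lposet n k. (Min B = Min A) = (Max (rv n A) = Max (rv n B))"
  proof (intro ballI)
    fix A B assume A: "A \<in> Lposet n k" and B: "B \<in> Lposet n k"
    have a: "A \<subseteq> {0..n}" "A \<noteq> {}" and b: "B \<subseteq> {0..n}" "B \<noteq> {}" using Lposet_ne A B by auto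
    have "Min A \<le> n" "Min B \<le> n" using Min_in[OF fin_sub[OF a(1)] a(2)] Min_in[OF fin_sub[OF b(1)] b(2)] a b by auto
    then show "(Min B = Min A) = (Max (rv n A) = Max (rv n B))" using rv_Max[OF a] rv_Max[OF b] by auto
  qed
qed

lemma L_to_R:
  assumes kn: "k \<le> n"
    and F: "flift C W (Lposet n (n-k) - {{0..n}}) (\<subseteq>) (Lposet n (n-k)) (\<subseteq>) (\<lambda>A B. Max A = Max B)"
  shows "flift C W (Lposet n k - {{0..n}}) (\<subseteq>) (Lposet n k) (\<subseteq>) (\<lambda>A B. Min B = Min A)"
proof (rule flift_iso[OF F, where phi = "rv n" and psi = "rv n"])
  show "\<forall>B\<in>Lposet n k. rv n B \<in> Lposet n (n - k)" using rv_Lposet[OF kn] by blast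
  show "\<forall>A\<in>Lposet n (n - k). rv n A \<in> Lposet n k" using rv_Lposet2[OF kn] by blast
  show "\<forall>A\<in>Lposet n k. rv n (rv n A) = A" by (rule rv_rv_L)
  show "\<forall>B\<in>Lposet n (n - k). rv n (rv n B) = B" by (rule rv_rv_L)
  show "Lposet n k - {{0..n}} \<subseteq> Lposet n k" by blast
  show "Lposet n (n - k) - {{0..n}} \<subseteq> Lposet n (n - k)" by blast
  show "\<forall>A\<in>Lposet n (n - k). (A \<in> Lposet n (n - k) - {{0..n}}) = (rv n A \<in> Lposet n k - {{0..n}})"
  proof
    fix A assume A: "A \<in> Lposet n (n - k)"
    have "A = {0..n} \<longleftrightarrow> rv n A = {0..n}" by (rule rv_full_iff) (use Lposet_ne[OF A] in blast)
    moreover have "rv n A \<in> Lposet n k" by (rule rv_Lposet2[OF kn A])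
    ultimately show "(A \<in> Lposet n (n - k) - {{0..n}}) = (rv n A \<in> Lposet n k - {{0..n}})"
      using A by blast
  qed
  show "\<forall>A\<in>Lposet n (n - k). \<forall>B\<in>Lposet n (n - k). (A \<subseteq> B) = (rv n A \<subseteq> rv n B)"
    by (rule rv_subset_L) blast
  show "\<forall>A\<in>Lposet n (n - k) - {{0..n}}. \<forall>B\<in>Lposet n (n - k) - {{0..n}}. (A \<subseteq> B) = (rv n A \<subseteq> rv n B)"
    by (rule rv_subset_L) blast
  show "\<forall>A\<in>Lposet n (n - k). \<forall>B\<in>Lposet n (n - k). (Max A = Max B) = (Min (rv n B) = Min (rv n A))"
  proof (intro ballI)
    fix A B assume A: "A \<in> Lposet n (n - k)" and B: "B \<in> Lposet n (n - k)"
    have a: "A \<subseteq> {0..n}" "A \<noteq> {}" and b: "B \<subseteq> {0..n}" "B \<noteq> {}" using Lposet_ne A B by auto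
    have "Max A \<le> n" "Max B \<le> n" using Max_le_n a b by auto
    then show "(Max A = Max B) = (Min (rv n B) = Min (rv n A))" using rv_Min[OF a] rv_Min[OF b] by auto
  qed
qed




lemma compclosed_op:
  assumes C: "category C" and WA: "W \<subseteq> Arr C" and WI: "\<forall>x\<in>Obj C. Id C x \<in> W"
  shows "mcat.compclosed (op_cat C) W \<longleftrightarrow> mcat.compclosed C W"
proof -
  interpret m1: mcat C W using C WA WI by unfold_locales auto
  interpret m2: mcat "op_cat C" W using op_category[OF C] WA WI by unfold_locales auto
  show ?thesis unfolding m1.compclosed_def m2.compclosed_def op_simps
  proof (intro iffI ballI impI)
    fix u v assume H: "\<forall>u\<in>W. \<forall>v\<in>W. Dom C u = Cod C v \<longrightarrow> Comp C u v \<in> W"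
      and u: "u \<in> W" and v: "v \<in> W" and e: "Cod C u = Dom C v"
    show "Comp C v u \<in> W" using H u v e[symmetric] by blast
  next
    fix u v assume H: "\<forall>u\<in>W. \<forall>v\<in>W. Cod C u = Dom C v \<longrightarrow> Comp C v u \<in> W"
      and u: "u \<in> W" and v: "v \<in> W" and e: "Dom C u = Cod C v"
    show "Comp C u v \<in> W" using H u v e[symmetric] by blast
  qed
qed

lemma CRF_CLF_op:
  assumes C: "category C" and WA: "W \<subseteq> Arr C" and WI: "\<forall>x\<in>Obj C. Id C x \<in> W"
  shows "CRF (cnerve C) (nmark C W) \<longleftrightarrow> CLF (cnerve (op_cat C)) (nmark (op_cat C) W)"
proof -
  interpret m1: mcat C W using C WA WI by unfold_locales auto
  interpret m2: mcat "op_cat C" W using op_category[OF C] WA WI by unfold_locales auto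
  have w: "flift C W {0,1,2} le21 {0,1,2} (\<le>) (\<lambda>_ _. True) \<longleftrightarrow>
     flift (op_cat C) W {0,1,2} le21 {0,1,2} (\<le>) (\<lambda>_ _. True)"
    using m1.weak_iff m2.weak_iff compclosed_op[OF C WA WI] by simp
  have e: "flift C W (Lposet n k - {{0..n}}) (\<supseteq>) (Lposet n k) (\<supseteq>) (\<lambda>A0 A1. Min A0 = Min A1) \<longleftrightarrow>
    flift (op_cat C) W (Lposet n (n - k) - {{0..n}}) (\<subseteq>) (Lposet n (n - k)) (\<subseteq>) (\<lambda>A0 A1. Max A0 = Max A1)"
    if kn: "k \<le> n" for n k
  proof -
    have "flift C W (Lposet n k - {{0..n}}) (\<supseteq>) (Lposet n k) (\<supseteq>) (\<lambda>A0 A1. Min A0 = Min A1) \<longleftrightarrow>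
      flift (op_cat C) W (Lposet n k - {{0..n}}) (\<subseteq>) (Lposet n k) (\<subseteq>) (\<lambda>A B. Min B = Min A)"
      using flift_op_iff[OF C, of W "Lposet n k - {{0..n}}" "(\<supseteq>)" "Lposet n k" "(\<supseteq>)" "\<lambda>A0 A1. Min A0 = Min A1"]
      by simp
    also have "\<dots> \<longleftrightarrow> flift (op_cat C) W (Lposet n (n - k) - {{0..n}}) (\<subseteq>) (Lposet n (n - k)) (\<subseteq>) (\<lambda>A0 A1. Max A0 = Max A1)"
      using R_to_L[OF kn] L_to_R[OF kn] by blast
    finally show ?thesis .
  qed
  have q: "(\<forall>n k. 2 \<le> n \<longrightarrow> k < n \<longrightarrow>
        flift C W (Lposet n k - {{0..n}}) (\<supseteq>) (Lposet n k) (\<supseteq>) (\<lambda>A0 A1. Min A0 = Min A1)) \<longleftrightarrow>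
     (\<forall>n k. 2 \<le> n \<longrightarrow> 0 < k \<longrightarrow> k \<le> n \<longrightarrow>
        flift (op_cat C) W (Lposet n k - {{0..n}}) (\<subseteq>) (Lposet n k) (\<subseteq>) (\<lambda>A0 A1. Max A0 = Max A1))"
  proof
    assume H: "\<forall>n k. 2 \<le> n \<longrightarrow> k < n \<longrightarrow>
        flift C W (Lposet n k - {{0..n}}) (\<supseteq>) (Lposet n k) (\<supseteq>) (\<lambda>A0 A1. Min A0 = Min A1)"
    show "\<forall>n k. 2 \<le> n \<longrightarrow> 0 < k \<longrightarrow> k \<le> n \<longrightarrow>
        flift (op_cat C) W (Lposet n k - {{0..n}}) (\<subseteq>) (Lposet n k) (\<subseteq>) (\<lambda>A0 A1. Max A0 = Max A1)"
    proof (intro allI impI)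
      fix n k :: nat assume n: "2 \<le> n" and k: "0 < k" "k \<le> n"
      have "flift C W (Lposet n (n - k) - {{0..n}}) (\<supseteq>) (Lposet n (n - k)) (\<supseteq>) (\<lambda>A0 A1. Min A0 = Min A1)"
        using H n k by simp
      then have "flift (op_cat C) W (Lposet n (n - (n - k)) - {{0..n}}) (\<subseteq>) (Lposet n (n - (n - k))) (\<subseteq>) (\<lambda>A0 A1. Max A0 = Max A1)"
        using e[of "n - k" n] by simp
      then show "flift (op_cat C) W (Lposet n k - {{0..n}}) (\<subseteq>) (Lposet n k) (\<subseteq>) (\<lambda>A0 A1. Max A0 = Max A1)"
        using k by simp
    qed
  next
    assume H: "\<forall>n k. 2 \<le> n \<longrightarrow> 0 < k \<longrightarrow> k \<le> n \<longrightarrow>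
        flift (op_cat C) W (Lposet n k - {{0..n}}) (\<subseteq>) (Lposet n k) (\<subseteq>) (\<lambda>A0 A1. Max A0 = Max A1)"
    show "\<forall>n k. 2 \<le> n \<longrightarrow> k < n \<longrightarrow>
        flift C W (Lposet n k - {{0..n}}) (\<supseteq>) (Lposet n k) (\<supseteq>) (\<lambda>A0 A1. Min A0 = Min A1)"
    proof (intro allI impI)
      fix n k :: nat assume n: "2 \<le> n" and k: "k < n"
      have "flift (op_cat C) W (Lposet n (n - k) - {{0..n}}) (\<subseteq>) (Lposet n (n - k)) (\<subseteq>) (\<lambda>A0 A1. Max A0 = Max A1)"
        using H n k by simp
      then show "flift C W (Lposet n k - {{0..n}}) (\<supseteq>) (Lposet n k) (\<supseteq>) (\<lambda>A0 A1. Min A0 = Min A1)"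
        using e[of k n] k by simp
    qed
  qed
  show ?thesis unfolding CRF_flift CLF_flift using w q by blast
qed

theorem theorem5p2:
  fixes C :: "('o, 'a) category" and W :: "'a set"
  assumes "category C"
    and "W \<subseteq> Arr C"
    and "\<forall>x\<in>Obj C. Id C x \<in> W"
  shows "(proper_left_fractions C W \<longleftrightarrow> CLF (cnerve C) (nmark C W)) \<and>
         (proper_right_fractions C W \<longleftrightarrow> CRF (cnerve C) (nmark C W))"
proof
  show "proper_left_fractions C W \<longleftrightarrow> CLF (cnerve C) (nmark C W)" by (rule part1[OF assms])
  have "proper_left_fractions (op_cat C) W \<longleftrightarrow> CLF (cnerve (op_cat C)) (nmark (op_cat C) W)"
    by (rule part1[OF op_category[OF assms(1)]]) (use assms in auto)
  then show "proper_right_fractions C W \<longleftrightarrow> CRF (cnerve C) (nmark C W)"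
    unfolding proper_right_fractions_def using CRF_CLF_op[OF assms] by simp
qed


end
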